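(* Let $n\ge1$. Every prime ideal $\mathfrak p$ of $\mathbb{S}_n$ can be written uniquely in the form $\mathfrak p=\mathbb{S}_{\mathcal N}\otimes\pi_{C\mathcal N}^{-1}(\mathfrak q)$, where $\mathcal N\subseteq\{1,\dots,n\}$ and $\mathfrak q$ is a prime ideal of $L_{C\mathcal N}$. Conversely, every ideal of this form is prime. Thus $\mathrm{Spec}(\mathbb{S}_n)=\coprod_{\mathcal N\subseteq\{1,\dots,n\}}\mathrm{Spec}(\mathbb{S}_n,\mathcal N)$, a disjoint union, where \[ \mathrm{Spec}(\mathbb{S}_n,\mathcal N)=\{\mathbb{S}_{\mathcal N}\otimes\pi_{C\mathcal N}^{-1}(\mathfrak q)\mid\mathfrak q\in\mathrm{Spec}(L_{C\mathcal N})\}. \]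
   Context: $K$ is a field. $\mathbb{S}_n$ is the $K$-algebra generated by $x_1,\dots,x_n,y_1,\dots,y_n$ subject to the defining relations $y_ix_i=1$ for all $i$, and $[x_i,y_j]=[x_i,x_j]=[y_i,y_j]=0$ for all $i\ne j$. For each $i$, $\mathbb{S}_1(i)$ is the subalgebra generated by $x_i,y_i$, and $\mathbb{S}_n=\mathbb{S}_1(1)\otimes\cdots\otimes\mathbb{S}_1(n)$. $F(i)=\bigoplus_{k,l\in\mathbb N}K(x_i^ky_i^l-x_i^{k+1}y_i^{l+1})$, an ideal of $\mathbb{S}_1(i)$ with $\mathbb{S}_1(i)/F(i)\cong K[x_i,x_i^{-1}]$ via $x_i\mapsto x_i$, $y_i\mapsto x_i^{-1}$. For $\mathcal N\subseteq\{1,\dots,n\}$, let $C\mathcal N$ be its complement and define: - $\mathbb{S}_{\mathcal N}=\bigotimes_{i\in\mathcal N}\mathbb{S}_1(i)$ (equal to $K$ if $\mathcal N=\emptyset$), so $\mathbb{S}_n=\mathbb{S}_{\mathcal N}\otimes\mathbb{S}_{C\mathcal N}$; - $L_{\mathcal N}=K[x_i,x_i^{-1}:i\in\mathcal N]$; - $\mathfrak a_{\mathcal N}=\sum_{i\in\mathcal N}\big(F(i)\otimes\bigotimes_{j\in\mathcal N\setminus\{i\}}\mathbb{S}_1(j)\big)$, an ideal of $\mathbb{S}_{\mathcal N}$; - $\pi_{\mathcal N}:\mathbb{S}_{\mathcal N}\to\mathbb{S}_{\mathcal N}/\mathfrak a_{\mathcal N}\cong L_{\mathcal N}$ the canonical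 epimorphism. Prime ideals are proper by convention. *)

theory Defs
  imports Main "HOL-Library.Poly_Mapping" "HOL-Library.Function_Algebras"
begin

text \<open>Bic k l stands for the monomial x^k y^l of S_1. Since yx = 1 we have
  x^a y^b x^c y^d = x^(a + (c - b)) y^((b - c) + d) (truncated subtraction on nat).
  The monoid operation is written additively so that the library monoid algebra
  (type-class instances of poly_mapping) applies.\<close>

datatype bic = Bic nat nat

fun bx :: "bic \<Rightarrow> nat" where "bx (Bic k l) = k"
fun by' :: "bic \<Rightarrow> nat" where "by' (Bic k l) = l"

instantiation bic :: monoid_add
begin
definition zero_bic :: bic where "zero_bic = Bic 0 0"
fun plus_bic :: "bic \<Rightarrow> bic \<Rightarrow> bic" where
  "plus_bic (Bic a b) (Bic c d) = Bic (a + (c - b)) ((b - c) + d)"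
instance
proof
  fix x y z :: bic
  show "x + y + z = x + (y + z)"
    by (cases x; cases y; cases z) auto
  show "0 + x = x" by (cases x) (simp add: zero_bic_def)
  show "x + 0 = x" by (cases x) (simp add: zero_bic_def)
qed
end

text \<open>Index set {1..n} is the finite type 'n. S_n = S_1(1) (x) ... (x) S_1(n) is the
  monoid algebra over K of the product of n copies of the bicyclic monoid: a
  monomial m :: 'n \<Rightarrow> bic stands for prod_i x_i^(bx (m i)) y_i^(by' (m i)).\<close>

type_synonym ('n, 'k) jac = "('n \<Rightarrow> bic) \<Rightarrow>\<^sub>0 'k"

text \<open>Laurent polynomials: monomial e :: 'n \<Rightarrow> int stands for prod_i x_i^(e i).\<close>
type_synonym ('n, 'k) laur = "('n \<Rightarrow> int) \<Rightarrow>\<^sub>0 'k"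

text \<open>S_N = tensor of S_1(i), i in N, as the subalgebra of S_n of elements only
  involving the variables x_i, y_i with i in N.\<close>
definition S_sub :: "'n set \<Rightarrow> ('n, 'k::field) jac set" where
  "S_sub N = {p. \<forall>m \<in> Poly_Mapping.keys p. \<forall>i. i \<notin> N \<longrightarrow> m i = 0}"

definition L_sub :: "'n set \<Rightarrow> ('n, 'k::field) laur set" where
  "L_sub N = {p. \<forall>e \<in> Poly_Mapping.keys p. \<forall>i. i \<notin> N \<longrightarrow> e i = 0}"

text \<open>pi_N : S_N \<rightarrow> S_N / a_N \<cong> L_N, i.e. the algebra map with x_i \<mapsto> x_i,
  y_i \<mapsto> x_i^-1 (tensor product of the maps S_1(i) \<rightarrow> S_1(i)/F(i) \<cong> K[x_i,x_i^-1]).\<close>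
definition lap_mon :: "('n \<Rightarrow> bic) \<Rightarrow> ('n \<Rightarrow> int)" where
  "lap_mon m = (\<lambda>i. int (bx (m i)) - int (by' (m i)))"

definition piS :: "('n, 'k::field) jac \<Rightarrow> ('n, 'k) laur" where
  "piS p = (\<Sum>m \<in> Poly_Mapping.keys p. Poly_Mapping.single (lap_mon m) (Poly_Mapping.lookup p m))"

definition pi_inv :: "'n set \<Rightarrow> ('n, 'k::field) laur set \<Rightarrow> ('n, 'k) jac set" where
  "pi_inv N q = {a \<in> S_sub N. piS a \<in> q}"

text \<open>S_N (x) J for J \<subseteq> S_{CN}, viewed inside S_n = S_N (x) S_{CN}: the K-span of
  the elements a (x) b = a b, a in S_N, b in J (scalars absorbed into a).\<close>
definition tens :: "'n set \<Rightarrow> ('n, 'k::field) jac set \<Rightarrow> ('n, 'k) jac set" where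
  "tens N J = {x. \<exists>r (a :: nat \<Rightarrow> ('n, 'k) jac) b. x = (\<Sum>i<r. a i * b i)
                  \<and> (\<forall>i<r. a i \<in> S_sub N \<and> b i \<in> J)}"

section \<open>Ideals and prime ideals (of a possibly noncommutative ring, given as a subring carrier)\<close>

definition ideal_in :: "'a::ring set \<Rightarrow> 'a set \<Rightarrow> bool" where
  "ideal_in R I \<longleftrightarrow> I \<subseteq> R \<and> 0 \<in> I \<and> (\<forall>a\<in>I. \<forall>b\<in>I. a + b \<in> I \<and> - a \<in> I)
     \<and> (\<forall>r\<in>R. \<forall>a\<in>I. r * a \<in> I \<and> a * r \<in> I)"

text \<open>Prime (proper by convention): for ideals I, J, IJ \<subseteq> P implies I \<subseteq> P or J \<subseteq> P.
  Since P is additively closed, IJ \<subseteq> P iff all products a b (a in I, b in J) lie in P.\<close>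
definition prime_in :: "'a::ring set \<Rightarrow> 'a set \<Rightarrow> bool" where
  "prime_in R P \<longleftrightarrow> ideal_in R P \<and> P \<noteq> R \<and>
     (\<forall>I J. ideal_in R I \<longrightarrow> ideal_in R J \<longrightarrow> (\<forall>a\<in>I. \<forall>b\<in>J. a * b \<in> P) \<longrightarrow> I \<subseteq> P \<or> J \<subseteq> P)"

definition Spec_N :: "'n set \<Rightarrow> ('n, 'k::field) jac set set" where
  "Spec_N N = {tens N (pi_inv (- N) q) | q. prime_in (L_sub (- N)) q}"

end

theory Submission
  imports Defs
begin


abbreviation sg :: "'a \<Rightarrow> 'b \<Rightarrow> 'a \<Rightarrow>\<^sub>0 'b::zero" where "sg \<equiv> Poly_Mapping.single"
abbreviation lk :: "('a \<Rightarrow>\<^sub>0 'b::zero) \<Rightarrow> 'a \<Rightarrow> 'b" where "lk \<equiv> Poly_Mapping.lookup"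
abbreviation ks :: "('a \<Rightarrow>\<^sub>0 'b::zero) \<Rightarrow> 'a set" where "ks \<equiv> Poly_Mapping.keys"

lemma expand: "p = (\<Sum>m\<in>ks p. sg m (lk p m))"
  by (rule poly_mapping_eqI) (simp add: lookup_sum lookup_single when_def in_keys_iff)

lemma lookup_sum_single:
  assumes "finite A"
  shows "lk (\<Sum>m\<in>A. sg (f m) (g m)) w = (\<Sum>m\<in>{m\<in>A. f m = w}. g m)"
  using assms by (simp add: lookup_sum lookup_single when_def sum.inter_filter)

lemma mult_expand:
  fixes a b :: "'a::monoid_add \<Rightarrow>\<^sub>0 'b::semiring_0"
  shows "a * b = (\<Sum>w\<in>ks a. \<Sum>v\<in>ks b. sg (w + v) (lk a w * lk b v))"
proof -
  have "a * b = (\<Sum>w\<in>ks a. sg w (lk a w)) * (\<Sum>v\<in>ks b. sg v (lk b v))"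
    using expand[of a] expand[of b] by simp
  also have "\<dots> = (\<Sum>w\<in>ks a. \<Sum>v\<in>ks b. sg w (lk a w) * sg v (lk b v))"
    by (subst sum_distrib_right) (simp only: sum_distrib_left)
  finally show ?thesis by (simp add: mult_single)
qed

lemma bic_zero: "(0::bic) = Bic 0 0" by (simp add: zero_bic_def)

lemma bic_cases_all: "(\<And>k l. b = Bic k l \<Longrightarrow> P) \<Longrightarrow> P" by (cases b) auto

definition Mon :: "'n set \<Rightarrow> ('n \<Rightarrow> bic) \<Rightarrow> bool" where
  "Mon N m \<longleftrightarrow> (\<forall>i. i \<notin> N \<longrightarrow> m i = 0)"

definition res :: "'n set \<Rightarrow> ('n \<Rightarrow> bic) \<Rightarrow> ('n \<Rightarrow> bic)" where
  "res N m = (\<lambda>i. if i \<in> N then m i else 0)"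

lemma S_sub_iff: "p \<in> S_sub N \<longleftrightarrow> (\<forall>m\<in>ks p. Mon N m)"
  by (simp add: S_sub_def Mon_def)

lemma Mon_add: "Mon N a \<Longrightarrow> Mon N b \<Longrightarrow> Mon N (a + b)"
  by (simp add: Mon_def)

lemma Mon_zero[simp]: "Mon N 0" by (simp add: Mon_def)

lemma Mon_res: "Mon N (res N m)" by (simp add: Mon_def res_def)

lemma res_split: "res N m + res (- N) m = m"
  by (rule ext) (simp add: res_def)

lemma res_add: "res N (a + b) = res N a + res N b"
  by (rule ext) (simp add: res_def)

lemma res_Mon: "Mon N m \<Longrightarrow> res N m = m"
  by (rule ext) (simp add: res_def Mon_def)

lemma res_Mon0: "Mon N m \<Longrightarrow> res (- N) m = 0"
  by (rule ext) (simp add: res_def Mon_def)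

lemma res_Mon0': "Mon (- N) m \<Longrightarrow> res N m = 0"
  by (rule ext) (simp add: res_def Mon_def)

lemma Mon_comm: "Mon A w \<Longrightarrow> Mon B v \<Longrightarrow> A \<inter> B = {} \<Longrightarrow> w + v = v + w"
  by (rule ext) (simp add: Mon_def; metis add_0_left add_0_right disjoint_iff)

lemma decomp_mon:
  assumes "Mon N u" "Mon (- N) v" "Mon N u'" "Mon (- N) v'" "u + v = u' + v'"
  shows "u = u' \<and> v = v'"
proof -
  have "res N (u + v) = u" "res N (u' + v') = u'"
    using assms(1-4) by (simp_all add: res_add res_Mon res_Mon0')
  moreover have "res (- N) (u + v) = v" "res (- N) (u' + v') = v'"
    using assms(1-4) by (simp_all add: res_add res_Mon res_Mon0)
  ultimately show ?thesis using assms(5) by simp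
qed

lemma S_sub_single: "Mon N m \<Longrightarrow> sg m c \<in> S_sub N"
  by (simp add: S_sub_iff)

lemma S_sub_zero[simp]: "0 \<in> S_sub N" by (simp add: S_sub_iff)
lemma S_sub_one[simp]: "1 \<in> S_sub N" by (simp add: S_sub_iff)

lemma S_sub_add: "a \<in> S_sub N \<Longrightarrow> b \<in> S_sub N \<Longrightarrow> a + b \<in> S_sub N"
  using keys_add[of a b] by (auto simp: S_sub_iff)

lemma S_sub_uminus: "a \<in> S_sub N \<Longrightarrow> - a \<in> S_sub N"
  by (simp add: S_sub_iff)

lemma S_sub_diff: "a \<in> S_sub N \<Longrightarrow> b \<in> S_sub N \<Longrightarrow> a - b \<in> S_sub N"
  using S_sub_add[of a N "- b"] S_sub_uminus by auto

lemma S_sub_sum: "(\<And>i. i \<in> A \<Longrightarrow> f i \<in> S_sub N) \<Longrightarrow> sum f A \<in> S_sub N"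
  by (induction A rule: infinite_finite_induct) (auto intro: S_sub_add)

lemma S_sub_mult: "a \<in> S_sub N \<Longrightarrow> b \<in> S_sub N \<Longrightarrow> a * b \<in> S_sub N"
  apply (subst mult_expand)
  apply (intro S_sub_sum S_sub_single Mon_add)
  by (auto simp: S_sub_iff)

lemma S_sub_mono: "a \<in> S_sub A \<Longrightarrow> A \<subseteq> B \<Longrightarrow> a \<in> S_sub B"
  by (auto simp: S_sub_iff Mon_def)

lemma S_sub_commute:
  fixes a b :: "('n, 'k::field) jac"
  assumes "a \<in> S_sub A" "b \<in> S_sub B" "A \<inter> B = {}"
  shows "a * b = b * a"
proof -
  have "a * b = (\<Sum>w\<in>ks a. \<Sum>v\<in>ks b. sg (w + v) (lk a w * lk b v))" by (rule mult_expand)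
  also have "\<dots> = (\<Sum>w\<in>ks a. \<Sum>v\<in>ks b. sg (v + w) (lk b v * lk a w))"
    apply (intro sum.cong refl)
    apply (subst Mon_comm[of A _ B])
    using assms by (auto simp: S_sub_iff mult.commute)
  also have "\<dots> = b * a" by (subst mult_expand) (rule sum.swap)
  finally show ?thesis .
qed

lemma single_split: "sg m c = sg (res N m) 1 * sg (res (- N) m) (c::'k::field)"
  by (simp add: mult_single res_split)

lemma single_split': "sg m c = sg (res (- N) m) c * sg (res N m) (1::'k::field)"
  by (simp add: mult_single) (metis Mon_comm Mon_res res_split Compl_disjoint2 inf_commute)

lemma lookup_scal: "lk (sg 0 \<alpha> * c) v = (\<alpha>::'b::semiring_0) * lk c v"
  by (simp add: mult_map_scale_conv_mult[symmetric] map.rep_eq when_def)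

lemma scal_S: "sg 0 \<alpha> \<in> S_sub {}"
  by (rule S_sub_single) (simp add: Mon_def)

lemma scal_comm: "sg 0 (\<alpha>::'k::field) * (c::('n,'k) jac) = c * sg 0 \<alpha>"
  by (rule S_sub_commute[OF scal_S, of c UNIV]) (auto simp: S_sub_iff Mon_def)

definition cmpt :: "'n set \<Rightarrow> ('n \<Rightarrow> bic) \<Rightarrow> ('n, 'k::field) jac \<Rightarrow> ('n, 'k) jac" where
  "cmpt N u x = (\<Sum>m\<in>{m\<in>ks x. res N m = u}. sg (res (- N) m) (lk x m))"

lemma comp_lookup: "lk (cmpt N u x) v = (if Mon N u \<and> Mon (- N) v then lk x (u + v) else 0)"
proof -
  have "lk (cmpt N u x) v = (\<Sum>m\<in>{m\<in>{m\<in>ks x. res N m = u}. res (- N) m = v}. lk x m)"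
    unfolding cmpt_def by (rule lookup_sum_single) simp
  also have "\<dots> = (if Mon N u \<and> Mon (- N) v then lk x (u + v) else 0)"
  proof (cases "Mon N u \<and> Mon (- N) v")
    case True
    have "{m\<in>{m\<in>ks x. res N m = u}. res (- N) m = v} = {u + v} \<inter> ks x"
    proof (intro set_eqI iffI)
      fix m assume "m \<in> {m\<in>{m\<in>ks x. res N m = u}. res (- N) m = v}"
      then show "m \<in> {u + v} \<inter> ks x" using res_split[of N m] by auto
    next
      fix m assume "m \<in> {u + v} \<inter> ks x"
      then show "m \<in> {m\<in>{m\<in>ks x. res N m = u}. res (- N) m = v}"
        using True by (auto simp: res_add res_Mon res_Mon0 res_Mon0')
    qed
    then have "(\<Sum>m\<in>{m\<in>{m\<in>ks x. res N m = u}. res (- N) m = v}. lk x m) = (\<Sum>m\<in>{u + v} \<inter> ks x. lk x m)"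
      by (simp only:)
    also have "\<dots> = lk x (u + v)"
    proof (cases "u + v \<in> ks x")
      case True
      then have "{u + v} \<inter> ks x = {u + v}" by blast
      then show ?thesis by (simp only: sum.insert_remove finite.emptyI) simp
    next
      case False
      then have "{u + v} \<inter> ks x = {}" by blast
      then show ?thesis using False by (simp add: in_keys_iff)
    qed
    finally show ?thesis using True by simp
  next
    case False
    have e: "{m\<in>{m\<in>ks x. res N m = u}. res (- N) m = v} = {}"
      using False Mon_res[of N] Mon_res[of "- N"] by auto
    show ?thesis using False by (subst e) auto
  qed
  finally show ?thesis .
qed

lemma comp_add: "cmpt N u (x + y) = cmpt N u x + cmpt N u y"
  by (rule poly_mapping_eqI) (simp add: comp_lookup lookup_add)

lemma comp_uminus: "cmpt N u (- x) = - cmpt N u x"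
  by (rule poly_mapping_eqI) (simp add: comp_lookup)

lemma comp_diff: "cmpt N u (x - y) = cmpt N u x - cmpt N u y"
  by (rule poly_mapping_eqI) (simp add: comp_lookup lookup_minus)

lemma comp_zero[simp]: "cmpt N u 0 = 0"
  by (rule poly_mapping_eqI) (simp add: comp_lookup)

lemma comp_sum: "cmpt N u (sum f A) = (\<Sum>i\<in>A. cmpt N u (f i))"
  by (induction A rule: infinite_finite_induct) (auto simp: comp_add)

lemma comp_S: "cmpt N u x \<in> S_sub (- N)"
  unfolding S_sub_iff by (auto simp: in_keys_iff comp_lookup split: if_splits)

lemma comp_notMon: "\<not> Mon N u \<Longrightarrow> cmpt N u x = 0"
  by (rule poly_mapping_eqI) (simp add: comp_lookup)

lemma comp_not_image: "u \<notin> res N ` ks x \<Longrightarrow> cmpt N u x = 0"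
  unfolding cmpt_def by (rule sum.neutral) auto

lemma reconstruct: "x = (\<Sum>u\<in>res N ` ks x. sg u 1 * cmpt N u x)"
proof -
  have "sg u 1 * cmpt N u x = (\<Sum>m\<in>{m\<in>ks x. res N m = u}. sg m (lk x m))" for u
    unfolding cmpt_def sum_distrib_left
    by (intro sum.cong refl) (auto simp: mult_single res_split)
  then have "(\<Sum>u\<in>res N ` ks x. sg u 1 * cmpt N u x) =
      (\<Sum>u\<in>res N ` ks x. \<Sum>m\<in>{m\<in>ks x. res N m = u}. sg m (lk x m))" by simp
  also have "\<dots> = (\<Sum>m\<in>ks x. sg m (lk x m))"
    by (rule sum.group) auto
  finally show ?thesis using expand[of x] by simp
qed

lemma lookup_mult_split:
  fixes a c :: "('n, 'k::field) jac"
  assumes a: "a \<in> S_sub N" and c: "c \<in> S_sub (- N)" and u: "Mon N u" and v: "Mon (- N) v"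
  shows "lk (a * c) (u + v) = lk a u * lk c v"
proof -
  have "lk (a * c) (u + v) = (\<Sum>w\<in>ks a. \<Sum>v'\<in>ks c. (lk a w * lk c v' when w + v' = u + v))"
    by (subst mult_expand) (simp add: lookup_sum lookup_single)
  also have "\<dots> = (\<Sum>w\<in>ks a. if w = u then (\<Sum>v'\<in>ks c. if v' = v then lk a w * lk c v' else 0) else 0)"
  proof (intro sum.cong refl)
    fix w assume w: "w \<in> ks a"
    have eq: "w + v' = u + v \<longleftrightarrow> w = u \<and> v' = v" if "v' \<in> ks c" for v'
      using w that a c u v decomp_mon[of N w v' u v] by (auto simp: S_sub_iff)
    show "(\<Sum>v'\<in>ks c. (lk a w * lk c v' when w + v' = u + v)) =
       (if w = u then (\<Sum>v'\<in>ks c. if v' = v then lk a w * lk c v' else 0) else 0)"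
    proof (cases "w = u")
      case True
      have eq': "w + v' = u + v \<longleftrightarrow> v' = v" if "v' \<in> ks c" for v'
        using eq[OF that] True by simp
      show ?thesis unfolding if_P[OF True]
        by (intro sum.cong refl) (simp add: eq' when_def)
    next
      case False
      then show ?thesis by (auto simp: eq when_def intro!: sum.neutral)
    qed
  qed
  also have "\<dots> = lk a u * lk c v"
    by (simp add: in_keys_iff)
  finally show ?thesis .
qed

lemma comp_mult:
  fixes a c :: "('n, 'k::field) jac"
  assumes a: "a \<in> S_sub N" and c: "c \<in> S_sub (- N)"
  shows "cmpt N u (a * c) = sg 0 (lk a u) * c"
proof (rule poly_mapping_eqI)
  fix v
  show "lk (cmpt N u (a * c)) v = lk (sg 0 (lk a u) * c) v"
  proof (cases "Mon N u \<and> Mon (- N) v")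
    case True
    then show ?thesis using lookup_mult_split[OF a c] by (simp add: comp_lookup lookup_scal)
  next
    case False
    then have "lk a u = 0 \<or> lk c v = 0" using a c by (auto simp: S_sub_iff in_keys_iff)
    then show ?thesis using False by (auto simp add: comp_lookup lookup_scal)
  qed
qed




definition dl :: "'n \<Rightarrow> ('n \<Rightarrow> bic)" where
  "dl i = (\<lambda>j. if j = i then Bic 1 1 else 0)"

definition Ei :: "'n \<Rightarrow> ('n, 'k::field) jac" where
  "Ei i = 1 - sg (dl i) 1"

definition dT :: "'n set \<Rightarrow> ('n \<Rightarrow> bic)" where
  "dT T = (\<lambda>j. if j \<in> T then Bic 1 1 else 0)"

definition EN :: "'n set \<Rightarrow> ('n, 'k::field) jac" where
  "EN N = (\<Sum>T\<in>Pow N. sg (dT T) ((-1) ^ card T))"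

lemma dl_add: "dl i + w = (if bx (w i) = 0 then w(i := Bic 1 (Suc (by' (w i)))) else w)"
proof -
  have "(dl i + w) j = (if bx (w i) = 0 then w(i := Bic 1 (Suc (by' (w i)))) else w) j" for j
  proof (cases "j = i")
    case True
    then show ?thesis by (cases "w i" rule: bic.exhaust) (auto simp: dl_def)
  next
    case False
    then show ?thesis by (simp add: dl_def)
  qed
  then show ?thesis by (rule ext)
qed

lemma add_dl: "w + dl i = (if by' (w i) = 0 then w(i := Bic (Suc (bx (w i))) 1) else w)"
proof -
  have "(w + dl i) j = (if by' (w i) = 0 then w(i := Bic (Suc (bx (w i))) 1) else w) j" for j
  proof (cases "j = i")
    case True
    then show ?thesis by (cases "w i" rule: bic.exhaust) (auto simp: dl_def)
  next
    case False
    then show ?thesis by (simp add: dl_def)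
  qed
  then show ?thesis by (rule ext)
qed

lemma res_zero[simp]: "res N 0 = 0" by (rule ext) (simp add: res_def)
lemma res_empty[simp]: "res {} w = 0" by (rule ext) (simp add: res_def)
lemma res_UNIV[simp]: "res UNIV w = w" by (rule ext) (simp add: res_def)
lemma dT_empty[simp]: "dT {} = 0" by (rule ext) (simp add: dT_def)

lemma Ei_left: "Ei i * sg w c = (if bx (w i) = 0 then sg w c - sg (w(i := Bic 1 (Suc (by' (w i))))) c else (0::('n,'k::field) jac))"
  unfolding Ei_def left_diff_distrib mult_single by (simp add: dl_add)

lemma Ei_right: "sg w c * Ei i = (if by' (w i) = 0 then sg w c - sg (w(i := Bic (Suc (bx (w i))) 1)) c else (0::('n,'k::field) jac))"
  unfolding Ei_def right_diff_distrib mult_single by (simp add: add_dl)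

lemma Ei_sandwich:
  "Ei i * sg w c * Ei i = (if w i = 0 then Ei i * sg (w(i := 0)) c else (0::('n,'k::field) jac))"
proof (cases "w i" rule: bic.exhaust)
  case (Bic k l)
  show ?thesis
  proof (cases "k = 0")
    case False
    then show ?thesis using Bic by (simp add: Ei_left bic_zero)
  next
    case k: True
    show ?thesis
    proof (cases "l = 0")
      case False
      then show ?thesis using Bic k by (simp add: Ei_left Ei_right left_diff_distrib bic_zero)
    next
      case True
      have "w(i := 0) = w" using Bic k True by (auto simp: fun_eq_iff bic_zero)
      then show ?thesis using Bic k True by (simp add: Ei_left Ei_right left_diff_distrib bic_zero)
    qed
  qed
qed

lemma Ei_S: "Ei i \<in> S_sub {i}"
  unfolding Ei_def by (intro S_sub_diff S_sub_one S_sub_single) (simp add: Mon_def dl_def)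

lemma EN_S: "EN N \<in> S_sub N"
  unfolding EN_def by (intro S_sub_sum S_sub_single) (auto simp: Mon_def dT_def)

lemma EN_empty[simp]: "EN {} = 1"
  by (simp add: EN_def)

lemma EN_insert:
  assumes "finite N" "i \<notin> N"
  shows "EN (insert i N) = Ei i * (EN N :: ('n,'k::field) jac)"
proof -
  have inj: "inj_on (insert i) (Pow N)" using assms(2) by (auto simp: inj_on_def)
  have d: "dl i + dT T = dT (insert i T)" if "T \<in> Pow N" for T
    using that assms(2) by (auto simp: fun_eq_iff dl_def dT_def bic_zero)
  have c: "card (insert i T) = Suc (card T)" if "T \<in> Pow N" for T
  proof -
    have "finite T" "i \<notin> T" using that assms finite_subset by auto
    then show ?thesis by simp
  qed
  have "EN (insert i N) = (\<Sum>T\<in>Pow N. sg (dT T) ((-1) ^ card T)) +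
       (\<Sum>T\<in>insert i ` Pow N. sg (dT T) ((-1::'k) ^ card T))"
    unfolding EN_def Pow_insert
    by (rule sum.union_disjoint) (use assms in auto)
  also have "(\<Sum>T\<in>insert i ` Pow N. sg (dT T) ((-1::'k) ^ card T)) =
      (\<Sum>T\<in>Pow N. sg (dT (insert i T)) ((-1) ^ card (insert i T)))"
    by (simp add: sum.reindex[OF inj])
  also have "\<dots> = - (\<Sum>T\<in>Pow N. sg (dl i) 1 * sg (dT T) ((-1) ^ card T))"
    unfolding sum_negf[symmetric] by (intro sum.cong refl) (simp add: c d mult_single single_uminus)
  finally show ?thesis
    by (simp add: Ei_def left_diff_distrib sum_distrib_left[symmetric] EN_def)
qed

lemma Ei_EN_comm: "i \<notin> N \<Longrightarrow> Ei i * EN N = (EN N :: ('n,'k::field) jac) * Ei i"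
  by (rule S_sub_commute[OF Ei_S EN_S]) auto

lemma EN_sandwich:
  fixes c :: "'k::field"
  assumes "finite N"
  shows "EN N * sg w c * EN N = (if res N w = 0 then EN N * sg (res (- N) w) c else 0)"
  using assms
proof (induction N arbitrary: w rule: finite_induct)
  case empty
  then show ?case by simp
next
  case (insert i N)
  have comm: "Ei i * EN N = EN N * Ei i" using insert by (simp add: Ei_EN_comm)
  have "EN (insert i N) * sg w c * EN (insert i N) = Ei i * ((EN N * sg w c * EN N) * Ei i)"
    unfolding EN_insert[OF insert(1,2)]
    by (subst (2) comm) (simp only: mult.assoc)
  also have "\<dots> = (if res N w = 0 then Ei i * (EN N * sg (res (- N) w) c * Ei i) else 0)"
  proof (cases "res N w = 0")
    case True
    show ?thesis unfolding insert(3) if_P[OF True] by (rule refl)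
  next
    case False
    show ?thesis unfolding insert(3) if_not_P[OF False] by simp
  qed
  also have "\<dots> = (if res N w = 0 then EN N * (Ei i * sg (res (- N) w) c * Ei i) else 0)"
  proof -
    have "Ei i * (EN N * sg (res (- N) w) c * Ei i) = EN N * (Ei i * sg (res (- N) w) c * Ei i)"
      by (simp only: mult.assoc[symmetric] comm)
    then show ?thesis by simp
  qed
  also have "\<dots> = (if res (insert i N) w = 0 then EN (insert i N) * sg (res (- insert i N) w) c else 0)"
  proof -
    have r1: "res (insert i N) w = 0 \<longleftrightarrow> res N w = 0 \<and> w i = 0"
      by (auto simp: res_def fun_eq_iff)
    have r2: "res (- N) w i = w i" using insert by (simp add: res_def)
    have r3: "(res (- N) w)(i := 0) = res (- insert i N) w" by (auto simp: res_def fun_eq_iff)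
    have e: "EN N * (Ei i * sg (res (- insert i N) w) c) = EN (insert i N) * sg (res (- insert i N) w) c"
      unfolding EN_insert[OF insert(1,2)] by (simp only: mult.assoc[symmetric] comm)
    show ?thesis unfolding Ei_sandwich r1 r2 r3 using e by simp
  qed
  finally show ?case .
qed

lemma EN_idem: "finite N \<Longrightarrow> EN N * EN N = (EN N :: ('n,'k::field) jac)"
  using EN_sandwich[of N 0 "1::'k"] unfolding res_zero if_P[OF refl] single_one mult_1_right .

lemma EN_lookup0:
  assumes fin: "finite N" shows "lk (EN N :: ('n,'k::field) jac) 0 = 1"
proof -
  have "{T \<in> Pow N. dT T = 0} = {{}}" by (auto simp: dT_def fun_eq_iff bic_zero)
  moreover have "lk (EN N :: ('n,'k::field) jac) 0 = (\<Sum>T\<in>{T\<in>Pow N. dT T = 0}. (-1::'k)^card T)"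
    unfolding EN_def by (rule lookup_sum_single) (simp add: fin)
  ultimately show ?thesis by (simp only:) simp
qed

lemma comp_EN: "finite N \<Longrightarrow> c \<in> S_sub (- N) \<Longrightarrow> cmpt N 0 (EN N * c) = c"
  by (simp only: comp_mult[OF EN_S] EN_lookup0 single_one mult_1_left)




definition yK :: "('n \<Rightarrow> nat) \<Rightarrow> ('n, 'k::field) jac" where
  "yK K = sg (\<lambda>i. Bic 0 (K i)) 1"
definition xL :: "('n \<Rightarrow> nat) \<Rightarrow> ('n, 'k::field) jac" where
  "xL L = sg (\<lambda>i. Bic (L i) 0) 1"
definition cnd :: "'n set \<Rightarrow> ('n \<Rightarrow> nat) \<Rightarrow> ('n \<Rightarrow> nat) \<Rightarrow> ('n \<Rightarrow> bic) \<Rightarrow> bool" where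
  "cnd N K L u \<longleftrightarrow> (\<forall>i\<in>N. bx (u i) \<le> K i \<and> K i - bx (u i) + by' (u i) = L i)"

lemma bic_eta: "b = Bic (bx b) (by' b)" by (cases b) auto

lemma bic3: "Bic 0 K + b + Bic L 0 = 0 \<longleftrightarrow> bx b \<le> K \<and> K - bx b + by' b = L"
  by (cases b) (auto simp: bic_zero)

lemma bic3': "Bic 0 0 + b + Bic 0 0 = b"
  by (cases b) auto

lemma mono_sandwich:
  fixes c :: "'k::field"
  assumes fin: "finite N" and KL: "\<And>i. i \<notin> N \<Longrightarrow> K i = 0 \<and> L i = 0"
  shows "EN N * (yK K * sg m c * xL L) * EN N =
    (if cnd N K L (res N m) then EN N * sg (res (- N) m) c else 0)"
proof -
  define w where "w = (\<lambda>i. Bic 0 (K i)) + m + (\<lambda>i. Bic (L i) 0)"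
  have e1: "yK K * sg m c * xL L = sg w c" unfolding yK_def xL_def w_def by (simp add: mult_single)
  have e2: "res N w = 0 \<longleftrightarrow> cnd N K L (res N m)"
    unfolding cnd_def res_def w_def fun_eq_iff by (auto simp: bic3)
  have e3: "res (- N) w = res (- N) m"
    unfolding res_def w_def fun_eq_iff using KL by (auto simp: bic3')
  show ?thesis unfolding e1 EN_sandwich[OF fin] e2 e3 ..
qed

lemma big_sandwich:
  fixes x :: "('n, 'k::field) jac"
  assumes fin: "finite N" and KL: "\<And>i. i \<notin> N \<Longrightarrow> K i = 0 \<and> L i = 0"
  shows "EN N * (yK K * x * xL L) * EN N =
    EN N * (\<Sum>u\<in>{u\<in>res N ` ks x. cnd N K L u}. cmpt N u x)"
proof -
  define S where "S = {m\<in>ks x. cnd N K L (res N m)}"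
  have "yK K * x * xL L = yK K * (\<Sum>m\<in>ks x. sg m (lk x m)) * xL L"
    by (simp only: expand[symmetric])
  then have "EN N * (yK K * x * xL L) * EN N = (\<Sum>m\<in>ks x. EN N * (yK K * sg m (lk x m) * xL L) * EN N)"
    by (simp add: sum_distrib_left sum_distrib_right)
  also have "\<dots> = (\<Sum>m\<in>ks x. if cnd N K L (res N m) then EN N * sg (res (- N) m) (lk x m) else 0)"
    by (intro sum.cong refl) (rule mono_sandwich[OF fin KL])
  also have "\<dots> = (\<Sum>m\<in>S. EN N * sg (res (- N) m) (lk x m))"
    unfolding S_def by (simp add: sum.inter_filter)
  also have "\<dots> = EN N * (\<Sum>m\<in>S. sg (res (- N) m) (lk x m))"
    by (simp add: sum_distrib_left)
  also have "(\<Sum>m\<in>S. sg (res (- N) m) (lk x m)) =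
      (\<Sum>u\<in>{u\<in>res N ` ks x. cnd N K L u}. \<Sum>m | m \<in> S \<and> res N m = u. sg (res (- N) m) (lk x m))"
    by (rule sum.group[symmetric]) (auto simp: S_def)
  also have "\<dots> = (\<Sum>u\<in>{u\<in>res N ` ks x. cnd N K L u}. cmpt N u x)"
    unfolding cmpt_def S_def by (intro sum.cong refl) (auto intro: sum.cong)
  finally show ?thesis .
qed

definition addgrp :: "'a::ab_group_add set \<Rightarrow> bool" where
  "addgrp G \<longleftrightarrow> 0 \<in> G \<and> (\<forall>a\<in>G. \<forall>b\<in>G. a + b \<in> G) \<and> (\<forall>a\<in>G. - a \<in> G)"

lemma addgrp_sum: "addgrp G \<Longrightarrow> (\<And>i. i \<in> A \<Longrightarrow> f i \<in> G) \<Longrightarrow> sum f A \<in> G"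
  unfolding addgrp_def by (induction A rule: infinite_finite_induct) auto

lemma addgrp_diff: "addgrp G \<Longrightarrow> a \<in> G \<Longrightarrow> b \<in> G \<Longrightarrow> a - b \<in> G"
  unfolding addgrp_def by (metis diff_conv_add_uminus)

lemma extract_lem:
  fixes x :: "('n::finite, 'k::field) jac"
  assumes G: "addgrp G" and bad: "cmpt N u1 x \<notin> G"
  shows "\<exists>r s x'. x' \<in> S_sub (- N) \<and> x' \<notin> G \<and> r * x * s = EN N * x'"
proof -
  define \<mu> where "\<mu> u = (\<Sum>i\<in>N. bx (u i))" for u :: "'n \<Rightarrow> bic"
  obtain u0 where u0: "cmpt N u0 x \<notin> G" and min: "\<And>u. cmpt N u x \<notin> G \<Longrightarrow> \<mu> u0 \<le> \<mu> u"
    using ex_has_least_nat[of "\<lambda>u. cmpt N u x \<notin> G" u1 \<mu>] bad by blast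
  have G0: "0 \<in> G" using G by (simp add: addgrp_def)
  have u0M: "Mon N u0" using u0 comp_notMon[of N u0 x] G0 by metis
  have u0I: "u0 \<in> res N ` ks x" using u0 comp_not_image[of u0 N x] G0 by metis
  define K where "K i = (if i \<in> N then bx (u0 i) else 0)" for i
  define L where "L i = (if i \<in> N then by' (u0 i) else 0)" for i
  have KL: "\<And>i. i \<notin> N \<Longrightarrow> K i = 0 \<and> L i = 0" by (simp add: K_def L_def)
  define T where "T = {u\<in>res N ` ks x. cnd N K L u}"
  have finT: "finite T" unfolding T_def by simp
  have u0T: "u0 \<in> T" unfolding T_def cnd_def K_def L_def using u0I by auto
  have others: "cmpt N u x \<in> G" if "u \<in> T - {u0}" for u
  proof (rule ccontr)
    assume nG: "cmpt N u x \<notin> G"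
    have uM: "Mon N u" using that Mon_res unfolding T_def by auto
    have c: "cnd N K L u" using that unfolding T_def by auto
    have le: "\<forall>i\<in>N. bx (u i) \<le> bx (u0 i)" using c by (auto simp: cnd_def K_def)
    have "\<exists>i\<in>N. bx (u i) < bx (u0 i)"
    proof (rule ccontr)
      assume "\<not> ?thesis"
      then have eqx: "\<forall>i\<in>N. bx (u i) = bx (u0 i)" using le by force
      then have "\<forall>i\<in>N. by' (u i) = by' (u0 i)" using c by (auto simp: cnd_def K_def L_def)
      then have "u i = u0 i" for i
        using eqx uM u0M bic_eta[of "u i"] bic_eta[of "u0 i"] by (cases "i \<in> N") (auto simp: Mon_def)
      then show False using that by auto
    qed
    then have "\<mu> u < \<mu> u0" unfolding \<mu>_def using le by (intro sum_strict_mono_ex1) auto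
    then show False using min[OF nG] by simp
  qed
  define x' where "x' = (\<Sum>u\<in>T. cmpt N u x)"
  have x'S: "x' \<in> S_sub (- N)" unfolding x'_def by (intro S_sub_sum comp_S)
  have "x' = cmpt N u0 x + (\<Sum>u\<in>T - {u0}. cmpt N u x)"
    unfolding x'_def using finT u0T by (simp add: sum.remove)
  then have "cmpt N u0 x = x' - (\<Sum>u\<in>T - {u0}. cmpt N u x)" by simp
  moreover have "(\<Sum>u\<in>T - {u0}. cmpt N u x) \<in> G" using others by (intro addgrp_sum[OF G])
  ultimately have x'G: "x' \<notin> G" using u0 addgrp_diff[OF G] by metis
  have "EN N * (yK K * x * xL L) * EN N = EN N * x'"
    unfolding x'_def T_def by (rule big_sandwich[OF finite KL])
  then have "(EN N * yK K) * x * (xL L * EN N) = EN N * x'" by (simp add: mult.assoc)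
  then show ?thesis using x'S x'G by blast
qed




section \<open>Prime criteria\<close>

lemma ideal_inD:
  assumes "ideal_in R I"
  shows "I \<subseteq> R" "0 \<in> I" "\<And>a b. a \<in> I \<Longrightarrow> b \<in> I \<Longrightarrow> a + b \<in> I" "\<And>a. a \<in> I \<Longrightarrow> - a \<in> I"
    "\<And>r a. r \<in> R \<Longrightarrow> a \<in> I \<Longrightarrow> r * a \<in> I" "\<And>r a. r \<in> R \<Longrightarrow> a \<in> I \<Longrightarrow> a * r \<in> I"
  using assms unfolding ideal_in_def by blast+

lemma ideal_addgrp: "ideal_in R I \<Longrightarrow> addgrp I"
  unfolding addgrp_def ideal_in_def by blast

lemma prime_elem:
  fixes P :: "'a::ring_1 set"
  assumes pr: "prime_in UNIV P" and all: "\<And>s. a * s * b \<in> P"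
  shows "a \<in> P \<or> b \<in> P"
proof -
  have P: "ideal_in UNIV P" using pr by (simp add: prime_in_def)
  note Pd = ideal_inD[OF P]
  define I where "I = {x. \<forall>s. x * s * b \<in> P}"
  define J where "J = {y. \<forall>x\<in>I. \<forall>s. x * s * y \<in> P}"
  have I: "ideal_in UNIV I"
    unfolding ideal_in_def
  proof (intro conjI ballI)
    show "I \<subseteq> UNIV" by simp
    show "0 \<in> I" using Pd by (simp add: I_def)
    show "x + y \<in> I" if "x \<in> I" "y \<in> I" for x y
      using that Pd(3) by (simp add: I_def distrib_right)
    show "- x \<in> I" if "x \<in> I" for x
      using that Pd(4) by (simp add: I_def)
    show "r * x \<in> I" if "x \<in> I" for r x
    proof -
      have "r * x * s * b = r * (x * s * b)" for s by (simp add: mult.assoc)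
      then show ?thesis using that Pd(5) by (simp add: I_def)
    qed
    show "x * r \<in> I" if "x \<in> I" for r x
    proof -
      have "x * r * s * b = x * (r * s) * b" for s by (simp add: mult.assoc)
      then show ?thesis using that by (simp add: I_def)
    qed
  qed
  have J: "ideal_in UNIV J"
    unfolding ideal_in_def
  proof (intro conjI ballI)
    show "J \<subseteq> UNIV" by simp
    show "0 \<in> J" using Pd by (simp add: J_def)
    show "x + y \<in> J" if "x \<in> J" "y \<in> J" for x y
      using that Pd(3) by (simp add: J_def distrib_left)
    show "- x \<in> J" if "x \<in> J" for x
      using that Pd(4) by (simp add: J_def)
    show "r * y \<in> J" if "y \<in> J" for r y
    proof -
      have "x * s * (r * y) = x * (s * r) * y" for x s by (simp add: mult.assoc)
      then show ?thesis using that by (simp add: J_def)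
    qed
    show "y * r \<in> J" if "y \<in> J" for r y
    proof -
      have "x * s * (y * r) = (x * s * y) * r" for x s by (simp add: mult.assoc)
      then show ?thesis using that Pd(6) by (simp add: J_def)
    qed
  qed
  have prod: "\<forall>x\<in>I. \<forall>y\<in>J. x * y \<in> P"
  proof (intro ballI)
    fix x y assume "x \<in> I" "y \<in> J"
    then have "x * 1 * y \<in> P" unfolding J_def by blast
    then show "x * y \<in> P" by simp
  qed
  have "I \<subseteq> P \<or> J \<subseteq> P" using pr I J prod unfolding prime_in_def by blast
  moreover have "a \<in> I" using all by (simp add: I_def)
  moreover have "b \<in> J" by (simp add: J_def I_def)
  ultimately show ?thesis by blast
qed

lemma prime_from_elem:
  fixes P :: "'a::ring_1 set"
  assumes P: "ideal_in UNIV P" and ne: "P \<noteq> UNIV"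
    and el: "\<And>a b. (\<And>s. a * s * b \<in> P) \<Longrightarrow> a \<in> P \<or> b \<in> P"
  shows "prime_in UNIV P"
  unfolding prime_in_def
proof (intro conjI P ne allI impI)
  fix I J :: "'a set"
  assume I: "ideal_in UNIV I" and J: "ideal_in UNIV J" and pr: "\<forall>a\<in>I. \<forall>b\<in>J. a * b \<in> P"
  show "I \<subseteq> P \<or> J \<subseteq> P"
  proof (rule ccontr)
    assume "\<not> ?thesis"
    then obtain a b where a: "a \<in> I" "a \<notin> P" and b: "b \<in> J" "b \<notin> P" by blast
    have "a * s * b \<in> P" for s
      using pr a(1) ideal_inD(5)[OF J, of s b] b(1) by (simp add: mult.assoc)
    then show False using el a b by blast
  qed
qed

definition subring :: "'a::ring_1 set \<Rightarrow> bool" where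
  "subring R \<longleftrightarrow> 0 \<in> R \<and> 1 \<in> R \<and> (\<forall>a\<in>R. \<forall>b\<in>R. a + b \<in> R \<and> a * b \<in> R \<and> - a \<in> R)"

lemma cprime_elem:
  fixes q :: "'a::comm_ring_1 set"
  assumes R: "subring R" and pr: "prime_in R q" and a: "a \<in> R" and b: "b \<in> R" and ab: "a * b \<in> q"
  shows "a \<in> q \<or> b \<in> q"
proof -
  have q: "ideal_in R q" using pr by (simp add: prime_in_def)
  note qd = ideal_inD[OF q]
  have R0: "0 \<in> R" and Radd: "\<And>x y. x \<in> R \<Longrightarrow> y \<in> R \<Longrightarrow> x + y \<in> R"
    and Rmul: "\<And>x y. x \<in> R \<Longrightarrow> y \<in> R \<Longrightarrow> x * y \<in> R" and Rneg: "\<And>x. x \<in> R \<Longrightarrow> - x \<in> R"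
    using R unfolding subring_def by auto
  define I where "I = {x\<in>R. x * b \<in> q}"
  define J where "J = {y\<in>R. \<forall>x\<in>I. x * y \<in> q}"
  have I: "ideal_in R I"
    unfolding ideal_in_def
  proof (intro conjI ballI)
    show "I \<subseteq> R" by (auto simp: I_def)
    show "0 \<in> I" using qd R0 by (simp add: I_def)
    show "x + y \<in> I" if "x \<in> I" "y \<in> I" for x y
      using that qd(3) Radd by (simp add: I_def distrib_right)
    show "- x \<in> I" if "x \<in> I" for x
      using that qd(4) Rneg by (simp add: I_def)
    show "r * x \<in> I" if "r \<in> R" "x \<in> I" for r x
      using that qd(5)[of r "x * b"] Rmul by (simp add: I_def mult.assoc)
    show "x * r \<in> I" if "r \<in> R" "x \<in> I" for r x
      using that qd(5)[of r "x * b"] Rmul by (simp add: I_def mult.commute mult.left_commute)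
  qed
  have J: "ideal_in R J"
    unfolding ideal_in_def
  proof (intro conjI ballI)
    show "J \<subseteq> R" by (auto simp: J_def)
    show "0 \<in> J" using qd R0 by (simp add: J_def)
    show "x + y \<in> J" if "x \<in> J" "y \<in> J" for x y
      using that qd(3) Radd by (simp add: J_def distrib_left)
    show "- x \<in> J" if "x \<in> J" for x
      using that qd(4) Rneg by (simp add: J_def)
    show "r * y \<in> J" if "r \<in> R" "y \<in> J" for r y
    proof -
      have "x * (r * y) \<in> q" if "x \<in> I" for x
      proof -
        have "x * y \<in> q" using \<open>y \<in> J\<close> that by (simp add: J_def)
        then have "r * (x * y) \<in> q" using qd(5) \<open>r \<in> R\<close> by blast
        then show ?thesis by (simp add: mult.left_commute)
      qed
      moreover have "r * y \<in> R" using that Rmul by (simp add: J_def)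
      ultimately show ?thesis by (simp add: J_def)
    qed
    show "y * r \<in> J" if "r \<in> R" "y \<in> J" for r y
    proof -
      have "x * (y * r) \<in> q" if "x \<in> I" for x
      proof -
        have "x * y \<in> q" using \<open>y \<in> J\<close> that by (simp add: J_def)
        then have "(x * y) * r \<in> q" using qd(6) \<open>r \<in> R\<close> by blast
        then show ?thesis by (simp add: mult.assoc)
      qed
      moreover have "y * r \<in> R" using that Rmul by (simp add: J_def)
      ultimately show ?thesis by (simp add: J_def)
    qed
  qed
  have prod: "\<forall>x\<in>I. \<forall>y\<in>J. x * y \<in> q" unfolding J_def by blast
  have "I \<subseteq> q \<or> J \<subseteq> q" using pr I J prod unfolding prime_in_def by blast
  moreover have "a \<in> I" using a ab by (simp add: I_def)
  moreover have "b \<in> J" using b by (simp add: J_def I_def mult.commute)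
  ultimately show ?thesis by blast
qed

lemma cprime_from_elem:
  fixes q :: "'a::comm_ring_1 set"
  assumes q: "ideal_in R q" and ne: "q \<noteq> R"
    and el: "\<And>a b. a \<in> R \<Longrightarrow> b \<in> R \<Longrightarrow> a * b \<in> q \<Longrightarrow> a \<in> q \<or> b \<in> q"
  shows "prime_in R q"
  unfolding prime_in_def
proof (intro conjI q ne allI impI)
  fix I J :: "'a set"
  assume I: "ideal_in R I" and J: "ideal_in R J" and pr: "\<forall>a\<in>I. \<forall>b\<in>J. a * b \<in> q"
  show "I \<subseteq> q \<or> J \<subseteq> q"
  proof (rule ccontr)
    assume "\<not> ?thesis"
    then obtain a b where a: "a \<in> I" "a \<notin> q" and b: "b \<in> J" "b \<notin> q" by blast
    have "a \<in> R" "b \<in> R" using a b ideal_inD(1)[OF I] ideal_inD(1)[OF J] by auto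
    then show False using el pr a b by blast
  qed
qed




section \<open>The map pi\<close>

lemma lap_add: "lap_mon (a + b) = lap_mon a + lap_mon b"
proof (rule ext)
  fix i
  show "lap_mon (a + b) i = (lap_mon a + lap_mon b) i"
    by (cases "a i" rule: bic.exhaust; cases "b i" rule: bic.exhaust) (auto simp: lap_mon_def)
qed

lemma lap_zero[simp]: "lap_mon 0 = 0"
  by (rule ext) (simp add: lap_mon_def bic_zero)

lemma piS_lookup: "lk (piS p) e = (\<Sum>m\<in>{m\<in>ks p. lap_mon m = e}. lk p m)"
  unfolding piS_def by (rule lookup_sum_single) simp

lemma piS_lookup':
  assumes "finite A" "ks p \<subseteq> A"
  shows "lk (piS p) e = (\<Sum>m\<in>{m\<in>A. lap_mon m = e}. lk p m)"
  unfolding piS_lookup using assms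
  by (intro sum.mono_neutral_left) (auto simp: in_keys_iff)

lemma piS_add: "piS (p + q) = piS p + piS q"
proof (rule poly_mapping_eqI)
  fix e
  define A where "A = ks p \<union> ks q"
  have "finite A" by (simp add: A_def)
  have k: "ks (p + q) \<subseteq> A" using keys_add[of p q] by (auto simp: A_def)
  have kp: "ks p \<subseteq> A" and kq: "ks q \<subseteq> A" by (auto simp: A_def)
  show "lk (piS (p + q)) e = lk (piS p + piS q) e"
    unfolding lookup_add piS_lookup'[OF \<open>finite A\<close> k]
      piS_lookup'[OF \<open>finite A\<close> kp] piS_lookup'[OF \<open>finite A\<close> kq]
    by (simp add: lookup_add sum.distrib)
qed

lemma piS_uminus: "piS (- p) = - piS p"
  by (rule poly_mapping_eqI) (simp add: piS_lookup sum_negf)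

lemma piS_zero[simp]: "piS 0 = 0"
  by (simp add: piS_def)

lemma piS_diff: "piS (p - q) = piS p - piS q"
  using piS_add[of p "- q"] by (simp add: piS_uminus)

lemma piS_sum: "piS (sum f A) = (\<Sum>i\<in>A. piS (f i))"
  by (induction A rule: infinite_finite_induct) (auto simp: piS_add)

lemma piS_single: "piS (sg m c) = sg (lap_mon m) c"
  by (cases "c = 0") (simp_all add: piS_def)

lemma piS_mult: "piS (p * q) = piS p * piS q"
proof -
  have "piS (p * q) = (\<Sum>w\<in>ks p. \<Sum>v\<in>ks q. sg (lap_mon w + lap_mon v) (lk p w * lk q v))"
    by (subst mult_expand) (simp add: piS_sum piS_single lap_add)
  also have "\<dots> = (\<Sum>w\<in>ks p. sg (lap_mon w) (lk p w)) * (\<Sum>v\<in>ks q. sg (lap_mon v) (lk q v))"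
    by (simp add: sum_distrib_left sum_distrib_right mult_single) (rule sum.swap)
  finally show ?thesis by (simp add: piS_def)
qed

lemma piS_one[simp]: "piS 1 = 1"
  using piS_single[of 0 1] by simp

definition canon :: "('n \<Rightarrow> int) \<Rightarrow> ('n \<Rightarrow> bic)" where
  "canon e = (\<lambda>i. if e i \<ge> 0 then Bic (nat (e i)) 0 else Bic 0 (nat (- e i)))"

lemma lap_canon[simp]: "lap_mon (canon e) = e"
  by (rule ext) (simp add: lap_mon_def canon_def)

definition canonS :: "('n, 'k::field) laur \<Rightarrow> ('n, 'k) jac" where
  "canonS r = (\<Sum>e\<in>ks r. sg (canon e) (lk r e))"

lemma L_sub_iff: "r \<in> L_sub A \<longleftrightarrow> (\<forall>e\<in>ks r. \<forall>i. i \<notin> A \<longrightarrow> e i = 0)"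
  by (simp add: L_sub_def)

lemma canon_Mon: "(\<And>i. i \<notin> A \<Longrightarrow> e i = 0) \<Longrightarrow> Mon A (canon e)"
  by (simp add: Mon_def canon_def bic_zero)

lemma canonS_S: "r \<in> L_sub A \<Longrightarrow> canonS r \<in> S_sub A"
  unfolding canonS_def by (intro S_sub_sum S_sub_single canon_Mon) (auto simp: L_sub_iff)

lemma piS_canonS: "piS (canonS r) = r"
  unfolding canonS_def piS_sum piS_single lap_canon by (rule expand[symmetric])

lemma keys_piS: "ks (piS p) \<subseteq> lap_mon ` ks p"
proof
  fix e assume "e \<in> ks (piS p)"
  then have "(\<Sum>m\<in>{m\<in>ks p. lap_mon m = e}. lk p m) \<noteq> 0" by (simp add: in_keys_iff piS_lookup)
  then have "{m\<in>ks p. lap_mon m = e} \<noteq> {}" by (metis sum.empty)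
  then obtain m where "m \<in> ks p" "lap_mon m = e" by blast
  then show "e \<in> lap_mon ` ks p" by blast
qed

lemma lap_Mon: "Mon A m \<Longrightarrow> i \<notin> A \<Longrightarrow> lap_mon m i = 0"
  by (simp add: Mon_def lap_mon_def bic_zero)

lemma piS_S: "p \<in> S_sub A \<Longrightarrow> piS p \<in> L_sub A"
  unfolding L_sub_iff
proof (intro ballI allI impI)
  fix e i assume p: "p \<in> S_sub A" and e: "e \<in> ks (piS p)" and i: "i \<notin> A"
  obtain m where m: "m \<in> ks p" "e = lap_mon m" using e keys_piS by blast
  have "Mon A m" using p m(1) by (simp add: S_sub_iff)
  then show "e i = 0" using lap_Mon[OF _ i] m(2) by simp
qed

lemma L_sub_eq: "L_sub A = piS ` S_sub A"
proof (intro subset_antisym subsetI)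
  fix r assume "r \<in> L_sub A"
  then show "r \<in> piS ` S_sub A" using canonS_S piS_canonS by (metis image_eqI)
next
  fix r assume "r \<in> piS ` S_sub A"
  then show "r \<in> L_sub A" using piS_S by blast
qed

lemma L_subring: "subring (L_sub A :: ('n, 'k::field) laur set)"
  unfolding subring_def L_sub_eq
proof (intro conjI ballI)
  show "0 \<in> piS ` S_sub A" using piS_zero S_sub_zero by (metis image_eqI)
  show "1 \<in> piS ` S_sub A" using piS_one S_sub_one by (metis image_eqI)
  fix a b assume "a \<in> piS ` (S_sub A :: ('n,'k) jac set)" "b \<in> piS ` (S_sub A :: ('n,'k) jac set)"
  then obtain a' b' where ab: "a' \<in> S_sub A" "b' \<in> S_sub A" "a = piS a'" "b = piS b'" by blast
  then show "a + b \<in> piS ` S_sub A" "a * b \<in> piS ` S_sub A" "- a \<in> piS ` S_sub A"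
  proof -
    have "a + b = piS (a' + b')" "a * b = piS (a' * b')" "- a = piS (- a')"
      using ab by (simp_all add: piS_add piS_mult piS_uminus)
    moreover have "a' + b' \<in> S_sub A" "a' * b' \<in> S_sub A" "- a' \<in> S_sub A"
      using ab by (simp_all add: S_sub_add S_sub_mult S_sub_uminus)
    ultimately show "a + b \<in> piS ` S_sub A" "a * b \<in> piS ` S_sub A" "- a \<in> piS ` S_sub A"
      by (auto intro: image_eqI)
  qed
qed




lemma ideal_sum: "ideal_in R P \<Longrightarrow> (\<And>i. i \<in> A \<Longrightarrow> f i \<in> P) \<Longrightarrow> sum f A \<in> P"
  by (rule addgrp_sum[OF ideal_addgrp])

lemma ideal_diff: "ideal_in R P \<Longrightarrow> a \<in> P \<Longrightarrow> b \<in> P \<Longrightarrow> a - b \<in> P"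
  by (rule addgrp_diff[OF ideal_addgrp])

lemma ideal_mult3: "ideal_in UNIV P \<Longrightarrow> e \<in> P \<Longrightarrow> a * e * b \<in> P"
  using ideal_inD(5,6)[of UNIV P] by blast

definition rho :: "('n::finite \<Rightarrow> bic) \<Rightarrow> nat" where
  "rho m = (\<Sum>i\<in>UNIV. min (bx (m i)) (by' (m i)))"

lemma mono_red:
  fixes P :: "('n::finite, 'k::field) jac set"
  assumes P: "ideal_in UNIV P" and E: "\<And>i. i \<in> A \<Longrightarrow> Ei i \<in> P"
  shows "Mon A m \<Longrightarrow> sg m c - sg (canon (lap_mon m)) c \<in> P"
proof (induction "rho m" arbitrary: m rule: less_induct)
  case less
  show ?case
  proof (cases "\<exists>i. bx (m i) \<noteq> 0 \<and> by' (m i) \<noteq> 0")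
    case False
    have "canon (lap_mon m) = m"
    proof (rule ext)
      fix i
      have "bx (m i) = 0 \<or> by' (m i) = 0" using False by auto
      then show "canon (lap_mon m) i = m i"
        by (cases "m i" rule: bic.exhaust) (auto simp: canon_def lap_mon_def)
    qed
    then show ?thesis using ideal_inD(2)[OF P] by simp
  next
    case True
    then obtain i k l where mi: "m i = Bic (Suc k) (Suc l)"
      by (metis bic_eta not0_implies_Suc)
    have iA: "i \<in> A" using less.prems mi by (auto simp: Mon_def bic_zero)
    define m' where "m' = m(i := Bic k l)"
    have lap': "lap_mon m' = lap_mon m"
      by (rule ext) (simp add: m'_def lap_mon_def mi)
    have "rho m' < rho m"
      unfolding rho_def
    proof (rule sum_strict_mono_ex1)
      show "\<forall>j\<in>UNIV. min (bx (m' j)) (by' (m' j)) \<le> min (bx (m j)) (by' (m j))"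
        by (simp add: m'_def mi min_def)
      show "\<exists>j\<in>UNIV. min (bx (m' j)) (by' (m' j)) < min (bx (m j)) (by' (m j))"
        by (rule bexI[of _ i]) (simp_all add: m'_def mi)
    qed simp
    moreover have "Mon A m'" using less.prems iA by (auto simp: Mon_def m'_def)
    ultimately have IH: "sg m' c - sg (canon (lap_mon m)) c \<in> P"
      using less.hyps[of m'] lap' by simp
    define z :: "'n \<Rightarrow> bic" where "z = 0"
    have e1: "z(i := Bic k 0) + dl i = z(i := Bic (Suc k) 1)"
      by (rule ext) (simp add: z_def dl_def)
    have e2: "z(i := Bic k 0) + z(i := Bic 0 l) = z(i := Bic k l)"
      by (rule ext) (simp add: z_def)
    have e3: "z(i := Bic (Suc k) 1) + z(i := Bic 0 l) = z(i := Bic (Suc k) (Suc l))"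
      by (rule ext) (simp add: z_def)
    have e4: "m(i := 0) + z(i := Bic k l) = m'"
      by (rule ext) (simp add: z_def m'_def)
    have e5: "m(i := 0) + z(i := Bic (Suc k) (Suc l)) = m"
      by (rule ext) (simp add: z_def mi)
    have e6: "m(i := 0) + z(i := Bic (Suc k) (Suc 0)) + z(i := Bic 0 l) = m"
      by (rule ext) (simp add: z_def mi)
    have e7: "m(i := 0) + z(i := Bic k 0) + z(i := Bic 0 l) = m'"
      by (rule ext) (simp add: z_def m'_def)
    have key: "sg m' c - sg m c = sg (m(i := 0)) c * (sg (z(i := Bic k 0)) 1 * Ei i * sg (z(i := Bic 0 l)) (1::'k))"
      unfolding Ei_def right_diff_distrib left_diff_distrib mult_single e1 mult_1_right
      by (simp add: mult_single e2 e3 e4 e5 e6 e7 add.assoc[symmetric])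
    have "sg m' c - sg m c \<in> P"
      unfolding key using ideal_mult3[OF P E[OF iA]] ideal_inD(5)[OF P] by (simp add: mult.assoc)
    then have "(sg m' c - sg (canon (lap_mon m)) c) - (sg m' c - sg m c) \<in> P"
      using IH ideal_diff[OF P] by blast
    then show ?thesis by simp
  qed
qed

lemma KER:
  fixes P :: "('n::finite, 'k::field) jac set"
  assumes P: "ideal_in UNIV P" and E: "\<And>i. i \<in> A \<Longrightarrow> Ei i \<in> P"
    and d: "d \<in> S_sub A" and pd: "piS d = 0"
  shows "d \<in> P"
proof -
  have z: "(\<Sum>m\<in>ks d. sg (canon (lap_mon m)) (lk d m)) = 0"
  proof (rule poly_mapping_eqI)
    fix w
    have "lk (\<Sum>m\<in>ks d. sg (canon (lap_mon m)) (lk d m)) w = (\<Sum>m\<in>{m\<in>ks d. canon (lap_mon m) = w}. lk d m)"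
      by (rule lookup_sum_single) simp
    also have "\<dots> = 0"
    proof (cases "canon (lap_mon w) = w")
      case True
      have "{m\<in>ks d. canon (lap_mon m) = w} = {m\<in>ks d. lap_mon m = lap_mon w}"
        using True by (metis lap_canon)
      then show ?thesis using pd piS_lookup[of d "lap_mon w"] by simp
    next
      case False
      have em: "{m\<in>ks d. canon (lap_mon m) = w} = {}"
        using False by (auto simp del: lap_canon) (metis lap_canon)
      show ?thesis by (simp only: em sum.empty)
    qed
    finally show "lk (\<Sum>m\<in>ks d. sg (canon (lap_mon m)) (lk d m)) w = lk 0 w" by simp
  qed
  have "(\<Sum>m\<in>ks d. sg m (lk d m) - sg (canon (lap_mon m)) (lk d m)) \<in> P"
    using d by (intro ideal_sum[OF P] mono_red[OF P E]) (auto simp: S_sub_iff)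
  then show ?thesis using z expand[of d] by (simp add: sum_subtractf)
qed

section \<open>The tensor characterization\<close>

definition Jok :: "'n set \<Rightarrow> ('n, 'k::field) jac set \<Rightarrow> bool" where
  "Jok N J \<longleftrightarrow> J \<subseteq> S_sub (- N) \<and> addgrp J \<and> (\<forall>c. \<forall>j\<in>J. sg 0 c * j \<in> J)"

lemma tens_char:
  fixes J :: "('n::finite, 'k::field) jac set"
  assumes J: "Jok N J"
  shows "x \<in> tens N J \<longleftrightarrow> (\<forall>u. cmpt N u x \<in> J)"
proof
  have JS: "J \<subseteq> S_sub (- N)" and G: "addgrp J" and sc: "\<And>c j. j \<in> J \<Longrightarrow> sg 0 c * j \<in> J"
    using J by (auto simp: Jok_def)
  assume "x \<in> tens N J"
  then obtain r and a b :: "nat \<Rightarrow> ('n, 'k) jac" where x: "x = (\<Sum>i<r. a i * b i)" and ab: "\<forall>i<r. a i \<in> S_sub N \<and> b i \<in> J"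
    unfolding tens_def by blast
  show "\<forall>u. cmpt N u x \<in> J"
  proof
    fix u
    have "cmpt N u x = (\<Sum>i<r. sg 0 (lk (a i) u) * b i)"
      unfolding x comp_sum using ab JS by (intro sum.cong refl comp_mult) auto
    also have "\<dots> \<in> J" using ab by (intro addgrp_sum[OF G] sc) auto
    finally show "cmpt N u x \<in> J" .
  qed
next
  assume all: "\<forall>u. cmpt N u x \<in> J"
  define U where "U = res N ` ks x"
  have "finite U" by (simp add: U_def)
  then obtain h where h: "bij_betw h {0..<card U} U" using ex_bij_betw_nat_finite by blast
  have "x = (\<Sum>u\<in>U. sg u 1 * cmpt N u x)" unfolding U_def by (rule reconstruct)
  also have "\<dots> = (\<Sum>i\<in>{0..<card U}. sg (h i) 1 * cmpt N (h i) x)"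
    by (rule sum.reindex_bij_betw[OF h, symmetric])
  finally have x: "x = (\<Sum>i<card U. sg (h i) 1 * cmpt N (h i) x)" by (simp add: lessThan_atLeast0)
  have "\<forall>i<card U. sg (h i) 1 \<in> S_sub N \<and> cmpt N (h i) x \<in> J"
  proof (intro allI impI conjI)
    fix i assume "i < card U"
    then have "h i \<in> U" using h by (auto simp: bij_betw_def)
    then obtain m where "h i = res N m" unfolding U_def by blast
    then show "sg (h i) 1 \<in> S_sub N" using S_sub_single[OF Mon_res] by simp
    show "cmpt N (h i) x \<in> J" using all by simp
  qed
  then show "x \<in> tens N J" unfolding tens_def mem_Collect_eq using x
    by (intro exI[of _ "card U"] exI[of _ "\<lambda>i. sg (h i) 1"] exI[of _ "\<lambda>i. cmpt N (h i) x"]) simp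
qed

lemma tens_subset:
  fixes J :: "('n, 'k::field) jac set"
  assumes P: "ideal_in UNIV P" and JP: "J \<subseteq> P"
  shows "tens N J \<subseteq> P"
proof
  fix x assume "x \<in> tens N J"
  then obtain r and a b :: "nat \<Rightarrow> ('n, 'k) jac" where x: "x = (\<Sum>i<r. a i * b i)" and ab: "\<forall>i<r. a i \<in> S_sub N \<and> b i \<in> J"
    unfolding tens_def by blast
  show "x \<in> P" unfolding x using ab JP by (intro ideal_sum[OF P]) (auto intro: ideal_inD(5)[OF P])
qed

definition Jid :: "'n set \<Rightarrow> ('n, 'k::field) jac set \<Rightarrow> bool" where
  "Jid N J \<longleftrightarrow> J \<subseteq> S_sub (- N) \<and> addgrp J \<and> (\<forall>s\<in>S_sub (- N). \<forall>j\<in>J. s * j \<in> J \<and> j * s \<in> J)"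

lemma Jid_Jok: fixes J :: "('n, 'k::field) jac set" shows "Jid N J \<Longrightarrow> Jok N J"
proof -
  have "\<forall>c. (sg 0 c :: ('n, 'k) jac) \<in> S_sub (- N)" by (simp add: S_sub_single)
  then show "Jid N J \<Longrightarrow> Jok N J" unfolding Jid_def Jok_def by blast
qed

lemma tens_addgrp:
  fixes J :: "('n::finite, 'k::field) jac set"
  assumes J: "Jok N J" shows "addgrp (tens N J)"
proof -
  have G: "addgrp J" using J by (simp add: Jok_def)
  show ?thesis unfolding addgrp_def
  proof (intro conjI ballI)
    show "0 \<in> tens N J" unfolding tens_char[OF J] using G by (simp add: addgrp_def)
    fix a b assume a: "a \<in> tens N J" and b: "b \<in> tens N J"
    then show "a + b \<in> tens N J" "- a \<in> tens N J"
      unfolding tens_char[OF J] using G by (auto simp: comp_add comp_uminus addgrp_def)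
  qed
qed

lemma tens_lmono:
  fixes J :: "('n::finite, 'k::field) jac set"
  assumes J: "Jid N J" and x: "x \<in> tens N J"
  shows "sg m c * x \<in> tens N J"
proof -
  obtain r and a b :: "nat \<Rightarrow> ('n, 'k) jac" where x: "x = (\<Sum>i<r. a i * b i)" and ab: "\<forall>i<r. a i \<in> S_sub N \<and> b i \<in> J"
    using x unfolding tens_def by blast
  have JS: "J \<subseteq> S_sub (- N)" and cl: "\<And>s j. s \<in> S_sub (- N) \<Longrightarrow> j \<in> J \<Longrightarrow> s * j \<in> J"
    using J by (auto simp: Jid_def)
  have sN: "sg (res N m) 1 \<in> S_sub N" and sC: "sg (res (- N) m) c \<in> S_sub (- N)"
    by (auto intro: S_sub_single Mon_res)
  have "sg m c * x = (\<Sum>i<r. (sg (res N m) 1 * a i) * (sg (res (- N) m) c * b i))"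
  proof -
    have "sg m c * (a i * b i) = (sg (res N m) 1 * a i) * (sg (res (- N) m) c * b i)" if "i < r" for i
    proof -
      have comm: "sg (res (- N) m) c * a i = a i * sg (res (- N) m) c"
        using S_sub_commute[OF sC, of "a i" N] ab that by auto
      have "sg m c * (a i * b i) = sg (res N m) 1 * (sg (res (- N) m) c * a i) * b i"
        by (subst single_split[of m c N]) (simp add: mult.assoc)
      also have "\<dots> = (sg (res N m) 1 * a i) * (sg (res (- N) m) c * b i)"
        by (simp add: comm mult.assoc)
      finally show ?thesis .
    qed
    then show ?thesis unfolding x sum_distrib_left by (intro sum.cong) auto
  qed
  moreover have "\<forall>i<r. sg (res N m) 1 * a i \<in> S_sub N \<and> sg (res (- N) m) c * b i \<in> J"
    using ab sN sC cl by (auto intro: S_sub_mult)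
  ultimately show ?thesis unfolding tens_def mem_Collect_eq
    by (intro exI[of _ r] exI[of _ "\<lambda>i. sg (res N m) 1 * a i"] exI[of _ "\<lambda>i. sg (res (- N) m) c * b i"]) simp
qed

lemma tens_rmono:
  fixes J :: "('n::finite, 'k::field) jac set"
  assumes J: "Jid N J" and x: "x \<in> tens N J"
  shows "x * sg m c \<in> tens N J"
proof -
  obtain r and a b :: "nat \<Rightarrow> ('n, 'k) jac" where x: "x = (\<Sum>i<r. a i * b i)" and ab: "\<forall>i<r. a i \<in> S_sub N \<and> b i \<in> J"
    using x unfolding tens_def by blast
  have JS: "J \<subseteq> S_sub (- N)" and cl: "\<And>s j. s \<in> S_sub (- N) \<Longrightarrow> j \<in> J \<Longrightarrow> j * s \<in> J"
    using J by (auto simp: Jid_def)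
  have sN: "sg (res N m) 1 \<in> S_sub N" and sC: "sg (res (- N) m) c \<in> S_sub (- N)"
    by (auto intro: S_sub_single Mon_res)
  have "x * sg m c = (\<Sum>i<r. (a i * sg (res N m) 1) * (b i * sg (res (- N) m) c))"
  proof -
    have "(a i * b i) * sg m c = (a i * sg (res N m) 1) * (b i * sg (res (- N) m) c)" if "i < r" for i
    proof -
      have bS: "b i * sg (res (- N) m) c \<in> S_sub (- N)" using ab that JS sC by (auto intro: S_sub_mult)
      have comm: "(b i * sg (res (- N) m) c) * sg (res N m) 1 = sg (res N m) 1 * (b i * sg (res (- N) m) c)"
        using S_sub_commute[OF bS sN] by auto
      have "(a i * b i) * sg m c = a i * ((b i * sg (res (- N) m) c) * sg (res N m) 1)"
        by (subst single_split'[of m c N]) (simp add: mult.assoc)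
      also have "\<dots> = a i * (sg (res N m) 1 * (b i * sg (res (- N) m) c))"
        by (simp only: comm)
      also have "\<dots> = (a i * sg (res N m) 1) * (b i * sg (res (- N) m) c)"
        by (simp only: mult.assoc)
      finally show ?thesis .
    qed
    then show ?thesis unfolding x sum_distrib_right by (intro sum.cong) auto
  qed
  moreover have "\<forall>i<r. a i * sg (res N m) 1 \<in> S_sub N \<and> b i * sg (res (- N) m) c \<in> J"
    using ab sN sC cl by (auto intro: S_sub_mult)
  ultimately show ?thesis unfolding tens_def mem_Collect_eq
    by (intro exI[of _ r] exI[of _ "\<lambda>i. a i * sg (res N m) 1"] exI[of _ "\<lambda>i. b i * sg (res (- N) m) c"]) simp
qed

lemma tens_ideal:
  fixes J :: "('n::finite, 'k::field) jac set"
  assumes J: "Jid N J" shows "ideal_in UNIV (tens N J)"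
proof -
  have G: "addgrp (tens N J)" using tens_addgrp[OF Jid_Jok[OF J]] .
  have l: "r * x \<in> tens N J" if "x \<in> tens N J" for r x
  proof -
    have "r * x = (\<Sum>m\<in>ks r. sg m (lk r m) * x)"
      by (subst expand[of r]) (simp add: sum_distrib_right)
    also have "\<dots> \<in> tens N J" using that by (intro addgrp_sum[OF G] tens_lmono[OF J])
    finally show ?thesis .
  qed
  have rr: "x * r \<in> tens N J" if "x \<in> tens N J" for r x
  proof -
    have "x * r = (\<Sum>m\<in>ks r. x * sg m (lk r m))"
      by (subst expand[of r]) (simp add: sum_distrib_left)
    also have "\<dots> \<in> tens N J" using that by (intro addgrp_sum[OF G] tens_rmono[OF J])
    finally show ?thesis .
  qed
  show ?thesis using G l rr unfolding ideal_in_def addgrp_def by blast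
qed




lemma Ei_lemma:
  fixes P :: "('n::finite, 'k::field) jac set"
  assumes pr: "prime_in UNIV P" and nE: "Ei i \<notin> P" and d: "d \<in> S_sub (- {i})" and Ed: "Ei i * d \<in> P"
  shows "d \<in> P"
proof -
  have P: "ideal_in UNIV P" using pr by (simp add: prime_in_def)
  define z :: "'n \<Rightarrow> bic" where "z = 0"
  have mono: "Ei i * sg m c * d \<in> P" for m c
  proof -
    define w where "w = z(i := m i)"
    have sp: "sg m c = sg (m(i := 0)) c * sg w (1::'k)"
    proof -
      have "m(i := 0) + w = m" by (rule ext) (simp add: w_def z_def)
      then show ?thesis by (simp add: mult_single)
    qed
    have S1: "sg (m(i := 0)) c \<in> S_sub (- {i})" by (rule S_sub_single) (simp add: Mon_def)
    have S2: "sg w (1::'k) \<in> S_sub {i}" by (rule S_sub_single) (simp add: Mon_def w_def z_def)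
    have c1: "Ei i * sg (m(i := 0)) c = sg (m(i := 0)) c * Ei i"
      by (rule S_sub_commute[OF Ei_S S1]) auto
    have c2: "sg w 1 * d = d * sg w (1::'k)"
      by (rule S_sub_commute[OF S2 d]) auto
    have "Ei i * sg m c * d = sg (m(i := 0)) c * (Ei i * d) * sg w 1"
    proof -
      have "Ei i * sg m c * d = (Ei i * sg (m(i := 0)) c) * (sg w 1 * d)"
        by (simp add: sp mult.assoc)
      also have "\<dots> = sg (m(i := 0)) c * (Ei i * d) * sg w 1"
        by (simp only: c1 c2 mult.assoc)
      finally show ?thesis .
    qed
    then show ?thesis using ideal_mult3[OF P Ed] by simp
  qed
  have "Ei i * s * d \<in> P" for s
  proof -
    have "Ei i * s * d = (\<Sum>m\<in>ks s. Ei i * sg m (lk s m) * d)"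
      by (subst expand[of s]) (simp add: sum_distrib_left sum_distrib_right)
    also have "\<dots> \<in> P" by (intro ideal_sum[OF P] mono)
    finally show ?thesis .
  qed
  then show ?thesis using prime_elem[OF pr] nE by blast
qed

lemma EN_lemma:
  fixes P :: "('n::finite, 'k::field) jac set"
  assumes pr: "prime_in UNIV P" and fin: "finite M" and nE: "\<And>i. i \<in> M \<Longrightarrow> Ei i \<notin> P"
  shows "c \<in> S_sub (- M) \<Longrightarrow> EN M * c \<in> P \<Longrightarrow> c \<in> P"
  using fin nE
proof (induction M arbitrary: c rule: finite_induct)
  case empty
  then show ?case by simp
next
  case (insert i M)
  have "EN M * c \<in> S_sub (- {i})"
    using insert S_sub_mono[OF EN_S[of M], of "- {i}"] S_sub_mono[OF insert.prems(1), of "- {i}"]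
    by (auto intro!: S_sub_mult)
  moreover have "Ei i * (EN M * c) \<in> P"
    using insert.prems(2) insert.hyps by (simp add: EN_insert mult.assoc)
  ultimately have "EN M * c \<in> P" using Ei_lemma[OF pr] insert.prems(3) by blast
  moreover have "c \<in> S_sub (- M)" using insert.prems(1) by (rule S_sub_mono) auto
  ultimately show ?case using insert by blast
qed

lemma dir1:
  fixes P :: "('n::finite, 'k::field) jac set"
  assumes pr: "prime_in UNIV P"
  defines "N \<equiv> {i. Ei i \<notin> P}"
  defines "J \<equiv> P \<inter> S_sub (- N)"
  defines "q \<equiv> piS ` J"
  shows "P = tens N J" and "J = pi_inv (- N) q" and "prime_in (L_sub (- N)) q"
proof -
  have P: "ideal_in UNIV P" and Pne: "P \<noteq> UNIV" using pr by (auto simp: prime_in_def)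
  note Pd = ideal_inD[OF P]
  have one: "1 \<notin> P"
  proof
    assume "1 \<in> P"
    then have "x \<in> P" for x using Pd(6)[of x 1] by simp
    then show False using Pne by blast
  qed
  have Em: "\<And>i. i \<in> - N \<Longrightarrow> Ei i \<in> P" by (simp add: N_def)
  have GJ: "addgrp J" unfolding J_def addgrp_def using Pd by (auto intro: S_sub_add S_sub_uminus)
  have JP: "J \<subseteq> P" by (simp add: J_def)
  have Jok: "Jok N J"
    unfolding Jok_def
  proof (intro conjI allI ballI GJ)
    show "J \<subseteq> S_sub (- N)" by (simp add: J_def)
    fix c j assume "j \<in> J"
    then show "sg 0 c * j \<in> J" unfolding J_def using Pd(5) by (auto intro!: S_sub_mult S_sub_single)
  qed
  have comps: "cmpt N u x \<in> J" if "x \<in> P" for u x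
  proof (rule ccontr)
    assume "cmpt N u x \<notin> J"
    then obtain r s x' where x': "x' \<in> S_sub (- N)" "x' \<notin> J" "r * x * s = EN N * x'"
      using extract_lem[OF GJ] by blast
    have "EN N * x' \<in> P" using x'(3) ideal_mult3[OF P that] by metis
    then have "x' \<in> P" using EN_lemma[OF pr finite, of N] x'(1) by (simp add: N_def)
    then show False using x' by (simp add: J_def)
  qed
  show PT: "P = tens N J"
  proof
    show "P \<subseteq> tens N J" using comps tens_char[OF Jok] by blast
    show "tens N J \<subseteq> P" by (rule tens_subset[OF P JP])
  qed
  have ker: "a \<in> P" if "a \<in> S_sub (- N)" "piS a = 0" for a
    by (rule KER[OF P Em that])
  show JE: "J = pi_inv (- N) q"
  proof
    show "J \<subseteq> pi_inv (- N) q" by (auto simp: pi_inv_def q_def J_def)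
    show "pi_inv (- N) q \<subseteq> J"
    proof
      fix a assume "a \<in> pi_inv (- N) q"
      then obtain j where a: "a \<in> S_sub (- N)" and j: "j \<in> J" and pj: "piS a = piS j"
        by (auto simp: pi_inv_def q_def)
      have "a - j \<in> P" using a j pj by (intro ker) (auto simp: J_def piS_diff intro: S_sub_diff)
      moreover have "j \<in> P" using j by (simp add: J_def)
      ultimately have "(a - j) + j \<in> P" by (rule Pd(3))
      then show "a \<in> J" using a by (simp add: J_def)
    qed
  qed
  define R where "R = (L_sub (- N) :: ('n, 'k) laur set)"
  have R: "subring R" unfolding R_def by (rule L_subring)
  have canon_R: "canonS r \<in> S_sub (- N)" "piS (canonS r) = r" if "r \<in> R" for r
    using that canonS_S piS_canonS by (auto simp: R_def)
  have qid: "ideal_in R q"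
    unfolding ideal_in_def
  proof (intro conjI ballI)
    show "q \<subseteq> R" unfolding q_def R_def J_def by (auto intro: piS_S)
    show "0 \<in> q" unfolding q_def J_def using Pd(2) by (auto intro!: image_eqI[of _ _ 0])
    show "a + b \<in> q" if ha: "a \<in> q" and hb: "b \<in> q" for a b
    proof -
      obtain a' where "a' \<in> J" "a = piS a'" using ha unfolding q_def by blast
      moreover obtain b' where "b' \<in> J" "b = piS b'" using hb unfolding q_def by blast
      ultimately
      show ?thesis using GJ unfolding q_def addgrp_def by (auto simp: piS_add intro!: image_eqI[of _ _ "a' + b'"])
    qed
    show "- a \<in> q" if ha: "a \<in> q" for a
    proof -
      obtain a' where "a' \<in> J" "a = piS a'" using ha unfolding q_def by blast
      then show ?thesis using GJ unfolding q_def addgrp_def by (auto simp: piS_uminus intro!: image_eqI[of _ _ "- a'"])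
    qed
    show "r * a \<in> q" if hr: "r \<in> R" and ha: "a \<in> q" for r a
    proof -
      obtain a' where a': "a' \<in> J" "a = piS a'" using ha unfolding q_def by blast
      have "canonS r * a' \<in> J" using a' canon_R[OF hr] Pd(5) by (auto simp: J_def intro: S_sub_mult)
      moreover have "r * a = piS (canonS r * a')" using a' canon_R[OF hr] by (simp add: piS_mult)
      ultimately show ?thesis by (auto simp: q_def)
    qed
    show "a * r \<in> q" if hr: "r \<in> R" and ha: "a \<in> q" for r a
    proof -
      obtain a' where a': "a' \<in> J" "a = piS a'" using ha unfolding q_def by blast
      have "a' * canonS r \<in> J" using a' canon_R[OF hr] Pd(6) by (auto simp: J_def intro: S_sub_mult)
      moreover have "a * r = piS (a' * canonS r)" using a' canon_R[OF hr] by (simp add: piS_mult)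
      ultimately show ?thesis by (auto simp: q_def)
    qed
  qed
  note qd = ideal_inD[OF qid]
  have qne: "q \<noteq> R"
  proof
    assume "q = R"
    then have "1 \<in> q" using R by (simp add: subring_def)
    then obtain j where j: "j \<in> J" "piS j = 1" by (auto simp: q_def)
    have "1 - j \<in> P" using j by (intro ker) (auto simp: J_def piS_diff intro: S_sub_diff)
    moreover have "j \<in> P" using j by (simp add: J_def)
    ultimately have "(1 - j) + j \<in> P" by (rule Pd(3))
    then show False using one by simp
  qed
  show "prime_in (L_sub (- N)) q"
    unfolding R_def[symmetric]
  proof (rule cprime_from_elem[OF qid qne])
    fix a b assume a: "a \<in> R" and b: "b \<in> R" and ab: "a * b \<in> q"
    define \<alpha> where "\<alpha> = canonS a"
    define \<beta> where "\<beta> = canonS b"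
    have \<alpha>: "\<alpha> \<in> S_sub (- N)" "piS \<alpha> = a" using canon_R[OF a] by (auto simp: \<alpha>_def)
    have \<beta>: "\<beta> \<in> S_sub (- N)" "piS \<beta> = b" using canon_R[OF b] by (auto simp: \<beta>_def)
    have inJ: "t \<in> J" if "t \<in> S_sub (- N)" "piS t \<in> q" for t
      using that JE by (auto simp: pi_inv_def)
    have mono: "\<alpha> * sg m c * \<beta> \<in> P" for m c
    proof -
      have sN: "sg (res N m) 1 \<in> S_sub N" and sC: "sg (res (- N) m) c \<in> S_sub (- N)"
        by (auto intro: S_sub_single Mon_res)
      have comm: "\<alpha> * sg (res N m) 1 = sg (res N m) 1 * \<alpha>"
        using S_sub_commute[OF \<alpha>(1) sN] by auto
      have e: "\<alpha> * sg m c * \<beta> = sg (res N m) 1 * (\<alpha> * sg (res (- N) m) c * \<beta>)"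
        by (subst single_split[of m c N]) (simp only: mult.assoc[symmetric] comm)
      have "piS (\<alpha> * sg (res (- N) m) c * \<beta>) = (a * b) * piS (sg (res (- N) m) c)"
        using \<alpha> \<beta> by (simp add: piS_mult mult.commute mult.left_commute)
      moreover have "piS (sg (res (- N) m) c) \<in> R" using sC by (auto simp: R_def intro: piS_S)
      ultimately have "piS (\<alpha> * sg (res (- N) m) c * \<beta>) \<in> q" using qd(6) ab by simp
      moreover have "\<alpha> * sg (res (- N) m) c * \<beta> \<in> S_sub (- N)" using \<alpha> \<beta> sC by (auto intro: S_sub_mult)
      ultimately have "\<alpha> * sg (res (- N) m) c * \<beta> \<in> J" by (rule inJ[rotated])
      then show ?thesis unfolding e using JP Pd(5) by blast
    qed
    have "\<alpha> * s * \<beta> \<in> P" for s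
    proof -
      have "\<alpha> * s * \<beta> = (\<Sum>m\<in>ks s. \<alpha> * sg m (lk s m) * \<beta>)"
        by (subst expand[of s]) (simp add: sum_distrib_left sum_distrib_right)
      also have "\<dots> \<in> P" by (intro ideal_sum[OF P] mono)
      finally show ?thesis .
    qed
    then have "\<alpha> \<in> P \<or> \<beta> \<in> P" by (rule prime_elem[OF pr])
    then have "\<alpha> \<in> J \<or> \<beta> \<in> J" using \<alpha> \<beta> by (auto simp: J_def)
    then show "a \<in> q \<or> b \<in> q" using \<alpha> \<beta> by (auto simp: q_def)
  qed
qed




lemma lap_dl: "lap_mon (dl i) = 0"
  by (rule ext) (simp add: lap_mon_def dl_def bic_zero)

lemma dir2:
  fixes q :: "('n::finite, 'k::field) laur set"
  assumes pr: "prime_in (L_sub (- N)) q"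
  defines "J \<equiv> pi_inv (- N) q"
  defines "P \<equiv> tens N J"
  shows "prime_in UNIV P" and "{i. Ei i \<notin> P} = N" and "P \<inter> S_sub (- N) = J" and "piS ` J = q"
proof -
  define R where "R = (L_sub (- N) :: ('n, 'k) laur set)"
  have R: "subring R" unfolding R_def by (rule L_subring)
  have R1: "1 \<in> R" using R by (simp add: subring_def)
  have qid: "ideal_in R q" and qne: "q \<noteq> R" using pr by (auto simp: prime_in_def R_def)
  note qd = ideal_inD[OF qid]
  have one_q: "1 \<notin> q"
  proof
    assume "1 \<in> q"
    then have "r \<in> q" if "r \<in> R" for r using qd(6)[OF that, of 1] by simp
    then show False using qne qd(1) by blast
  qed
  have piR: "piS s \<in> R" if "s \<in> S_sub (- N)" for s
    using that by (simp add: R_def piS_S)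
  have JS: "J \<subseteq> S_sub (- N)" by (auto simp: J_def pi_inv_def)
  have inJ: "x \<in> J \<longleftrightarrow> x \<in> S_sub (- N) \<and> piS x \<in> q" for x by (simp add: J_def pi_inv_def)
  have GJ: "addgrp J"
    unfolding addgrp_def
  proof (intro conjI ballI)
    show "0 \<in> J" using qd(2) by (simp add: inJ)
    fix a b assume "a \<in> J" "b \<in> J"
    then have ab: "a \<in> S_sub (- N)" "piS a \<in> q" "b \<in> S_sub (- N)" "piS b \<in> q" using inJ by auto
    show "a + b \<in> J" unfolding inJ using ab qd(3) by (simp add: piS_add S_sub_add)
    show "- a \<in> J" unfolding inJ using ab qd(4) by (simp add: piS_uminus S_sub_uminus)
  qed
  have Jid: "Jid N J"
    unfolding Jid_def
  proof (intro conjI ballI JS GJ)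
    fix s j :: "('n, 'k) jac" assume s: "s \<in> S_sub (- N)" and j: "j \<in> J"
    then have j': "j \<in> S_sub (- N)" "piS j \<in> q" using inJ by auto
    show "s * j \<in> J" unfolding inJ using s j' qd(5)[OF piR[OF s]] by (auto simp: piS_mult intro: S_sub_mult)
    show "j * s \<in> J" unfolding inJ using s j' qd(6)[OF piR[OF s]] by (auto simp: piS_mult intro: S_sub_mult)
  qed
  note Jok = Jid_Jok[OF Jid]
  have Pid: "ideal_in UNIV P" unfolding P_def by (rule tens_ideal[OF Jid])
  have char: "x \<in> P \<longleftrightarrow> (\<forall>u. cmpt N u x \<in> J)" for x unfolding P_def by (rule tens_char[OF Jok])
  have J0: "0 \<in> J" using GJ by (simp add: addgrp_def)
  have inter: "x \<in> P \<longleftrightarrow> x \<in> J" if x: "x \<in> S_sub (- N)" for x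
  proof -
    have c: "cmpt N u x = (if u = 0 then x else 0)" for u
    proof -
      have "cmpt N u x = cmpt N u (1 * x)" by simp
      also have "\<dots> = sg 0 (lk 1 u) * x" by (rule comp_mult[OF S_sub_one x])
      finally show ?thesis by (simp add: lookup_one)
    qed
    show ?thesis unfolding char c using J0 by auto
  qed
  have one_P: "1 \<notin> P"
    using inter[OF S_sub_one] one_q by (simp add: inJ)
  show prP: "prime_in UNIV P"
  proof (rule prime_from_elem[OF Pid])
    show "P \<noteq> UNIV" using one_P by blast
    fix a b assume all: "\<And>s. a * s * b \<in> P"
    show "a \<in> P \<or> b \<in> P"
    proof (rule ccontr)
      assume "\<not> (a \<in> P \<or> b \<in> P)"
      then obtain ua ub where ua: "cmpt N ua a \<notin> J" and ub: "cmpt N ub b \<notin> J"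
        unfolding char by blast
      obtain r1 s1 a' where a': "a' \<in> S_sub (- N)" "a' \<notin> J" "r1 * a * s1 = EN N * a'"
        using extract_lem[OF GJ ua] by blast
      obtain r2 s2 b' where b': "b' \<in> S_sub (- N)" "b' \<notin> J" "r2 * b * s2 = EN N * b'"
        using extract_lem[OF GJ ub] by blast
      have "r1 * (a * (s1 * r2) * b) * s2 \<in> P" using ideal_mult3[OF Pid all] .
      moreover have "r1 * (a * (s1 * r2) * b) * s2 = (r1 * a * s1) * (r2 * b * s2)"
        by (simp add: mult.assoc)
      moreover have "(EN N * a') * (EN N * b') = EN N * (a' * b')"
      proof -
        have comm: "a' * EN N = EN N * a'" using S_sub_commute[OF a'(1) EN_S[of N]] by auto
        have "(EN N * a') * (EN N * b') = EN N * (a' * EN N) * b'" by (simp add: mult.assoc)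
        also have "\<dots> = (EN N * EN N) * (a' * b')" by (simp add: comm mult.assoc)
        moreover have "EN N * EN N = (EN N :: ('n, 'k) jac)" by (rule EN_idem) simp
        ultimately show ?thesis by simp
      qed
      ultimately have "EN N * (a' * b') \<in> P" using a'(3) b'(3) by simp
      then have "cmpt N 0 (EN N * (a' * b')) \<in> J" using char by blast
      then have "a' * b' \<in> J" using comp_EN[OF finite S_sub_mult[OF a'(1) b'(1)]] by simp
      then have "piS a' * piS b' \<in> q" by (simp add: inJ piS_mult)
      then have "piS a' \<in> q \<or> piS b' \<in> q"
        using cprime_elem[OF R pr[folded R_def] piR[OF a'(1)] piR[OF b'(1)]] by blast
      then show False using a' b' inJ by blast
    qed
  qed
  show "{i. Ei i \<notin> P} = N"
  proof (intro set_eqI iffI)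
    fix i assume "i \<in> {i. Ei i \<notin> P}"
    then have nP: "Ei i \<notin> P" by simp
    show "i \<in> N"
    proof (rule ccontr)
      assume iN: "i \<notin> N"
      have ES: "Ei i \<in> S_sub (- N)" using S_sub_mono[OF Ei_S, of i "- N"] iN by auto
      have "piS (Ei i :: ('n, 'k) jac) = 0"
        by (simp add: Ei_def piS_diff piS_single lap_dl)
      then have "Ei i \<in> J" using ES qd(2) by (simp add: inJ)
      then show False using nP inter[OF ES] by blast
    qed
  next
    fix i assume iN: "i \<in> N"
    show "i \<in> {i. Ei i \<notin> P}"
    proof (rule CollectI, rule notI)
      assume "Ei i \<in> P"
      then have "cmpt N 0 (Ei i) \<in> J" using char by blast
      moreover have "cmpt N 0 (Ei i :: ('n, 'k) jac) = 1"
      proof -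
        have ES: "Ei i \<in> S_sub N" using S_sub_mono[OF Ei_S, of i N] iN by auto
        have dl0: "dl i \<noteq> 0" by (auto simp: dl_def fun_eq_iff bic_zero)
        have "cmpt N 0 (Ei i) = cmpt N 0 (Ei i * 1)" by simp
        also have "\<dots> = sg 0 (lk (Ei i :: ('n, 'k) jac) 0) * 1" by (rule comp_mult[OF ES S_sub_one])
        also have "lk (Ei i :: ('n, 'k) jac) 0 = 1"
          using dl0 by (simp add: Ei_def lookup_minus lookup_single)
        finally show ?thesis by (simp only: single_one mult_1_right)
      qed
      ultimately show False using one_q by (simp add: inJ)
    qed
  qed
  show "P \<inter> S_sub (- N) = J" using inter JS by blast
  show "piS ` J = q"
  proof
    show "piS ` J \<subseteq> q" using inJ by blast
    show "q \<subseteq> piS ` J"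
    proof
      fix r assume r: "r \<in> q"
      then have "r \<in> R" using qd(1) by blast
      then have "canonS r \<in> S_sub (- N)" "piS (canonS r) = r"
        by (auto simp: R_def canonS_S piS_canonS)
      then show "r \<in> piS ` J" using r inJ by (metis image_eqI)
    qed
  qed
qed

lemma Spec_N_char:
  fixes P :: "('n::finite, 'k::field) jac set"
  assumes "P \<in> Spec_N N"
  shows "prime_in UNIV P" "N = {i. Ei i \<notin> P}"
proof -
  obtain q where q: "prime_in (L_sub (- N)) q" "P = tens N (pi_inv (- N) q)"
    using assms by (auto simp: Spec_N_def)
  show "prime_in UNIV P" using dir2(1)[OF q(1)] q(2) by simp
  show "N = {i. Ei i \<notin> P}" using dir2(2)[OF q(1)] q(2) by simp
qed

theorem theorem4p4:
  shows "(\<forall>P :: ('n::finite, 'k::field) jac set. prime_in UNIV P \<longrightarrow>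
            (\<exists>!(N, q). prime_in (L_sub (- N)) q \<and> P = tens N (pi_inv (- N) q)))
       \<and> (\<forall>(N :: 'n set) (q :: ('n, 'k) laur set). prime_in (L_sub (- N)) q \<longrightarrow>
            prime_in UNIV (tens N (pi_inv (- N) q)))
       \<and> {P :: ('n, 'k) jac set. prime_in UNIV P} = (\<Union>N. Spec_N N)
       \<and> (\<forall>N1 N2. N1 \<noteq> N2 \<longrightarrow> Spec_N N1 \<inter> (Spec_N N2 :: ('n, 'k) jac set set) = {})"
proof (intro conjI allI impI)
  fix P :: "('n, 'k) jac set"
  assume pr: "prime_in UNIV P"
  define N0 where "N0 = {i. Ei i \<notin> P}"
  define q0 where "q0 = piS ` (P \<inter> S_sub (- N0))"
  have P0: "P = tens N0 (pi_inv (- N0) q0)" and q0: "prime_in (L_sub (- N0)) q0"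
    using dir1[OF pr] unfolding N0_def[symmetric] q0_def[symmetric] by metis+
  show "\<exists>!(N, q). prime_in (L_sub (- N)) q \<and> P = tens N (pi_inv (- N) q)"
  proof (rule ex1I[of _ "(N0, q0)"])
    show "case (N0, q0) of (N, q) \<Rightarrow> prime_in (L_sub (- N)) q \<and> P = tens N (pi_inv (- N) q)"
      using P0 q0 by simp
    fix y
    assume y: "case y of (N, q) \<Rightarrow> prime_in (L_sub (- N)) q \<and> P = tens N (pi_inv (- N) q)"
    obtain N q where yNq: "y = (N, q)" by (cases y)
    then have q: "prime_in (L_sub (- N)) q" and PN: "P = tens N (pi_inv (- N) q)" using y by auto
    have "N = N0" using dir2(2)[OF q] PN by (simp add: N0_def)
    moreover have "q = q0" using dir2(3,4)[OF q] PN \<open>N = N0\<close> by (simp add: q0_def)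
    ultimately show "y = (N0, q0)" using yNq by simp
  qed
next
  fix N :: "'n set" and q :: "('n, 'k) laur set"
  assume "prime_in (L_sub (- N)) q"
  then show "prime_in UNIV (tens N (pi_inv (- N) q))" by (rule dir2(1))
next
  show "{P :: ('n, 'k) jac set. prime_in UNIV P} = (\<Union>N. Spec_N N)"
  proof (intro set_eqI iffI)
    fix P :: "('n, 'k) jac set"
    assume "P \<in> {P. prime_in UNIV P}"
    then have pr: "prime_in UNIV P" by simp
    define N0 where "N0 = {i. Ei i \<notin> P}"
    define q0 where "q0 = piS ` (P \<inter> S_sub (- N0))"
    have P0: "P = tens N0 (pi_inv (- N0) q0)" and q0: "prime_in (L_sub (- N0)) q0"
      using dir1[OF pr] unfolding N0_def[symmetric] q0_def[symmetric] by metis+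
    then have "P \<in> Spec_N N0" by (auto simp: Spec_N_def)
    then show "P \<in> (\<Union>N. Spec_N N)" by blast
  next
    fix P :: "('n, 'k) jac set"
    assume "P \<in> (\<Union>N. Spec_N N)"
    then obtain N where "P \<in> Spec_N N" by blast
    then show "P \<in> {P. prime_in UNIV P}" using Spec_N_char(1) by blast
  qed
next
  fix N1 N2 :: "'n set"
  assume ne: "N1 \<noteq> N2"
  show "Spec_N N1 \<inter> (Spec_N N2 :: ('n, 'k) jac set set) = {}"
  proof (rule ccontr)
    assume "Spec_N N1 \<inter> (Spec_N N2 :: ('n, 'k) jac set set) \<noteq> {}"
    then obtain P :: "('n, 'k) jac set" where "P \<in> Spec_N N1" "P \<in> Spec_N N2" by blast
    then have "N1 = {i. Ei i \<notin> P}" "N2 = {i. Ei i \<notin> P}" using Spec_N_char(2) by blast+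
    then show False using ne by simp
  qed
qed



end
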